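(* Let $(\chi,u)$ be a rooted chirotope and let $m$ be the minimal degree of $v$ in a weak triangulation of $(\chi,u)$. Then a weak triangulation $\Delta$ of $(\chi,u)$ is the extension of a triangulation of $\chi$ if and only if $v$ has degree $m$ in $\Delta$.
   Context: A chirotope on a finite set $E$ is a map $\chi$ from ordered triples of distinct elements to $\{-1,1\}$ satisfying alternating symmetry, interiority and transitivity axioms. A rooted chirotope $(\chi,u)$ is a chirotope $\chi$ on $X\cup\{u\}$ with $u$ an extreme element (there is $y\neq u$ with $\chi(u,y,z)$ constant over all other $z$). A segment is a pair of distinct elements; two segments sharing an endpoint never cross, and segments $xy$, $zt$ with four distinct endpoints cross iff $\chi(x,y,z)=-\chi(x,y,t)$ and $\chi(z,t,x)=-\chi(z,t,y)$. A triangulation of $\chi$ is an inclusion-maximal set of pairwise non-crossing segments. Add a new element $v$ and set $\chi(x,y,v)=-\chi(x,y,u)$ for $x,y\in X$ ($\chi(x,u,v)$ stays undefined). For segments with endpoints in $X\cup\{u,v\}$ other than $uv$, crossing is defined by the same rule, where a segment containing $u$ and a segment containing $v$ are never crossing (so only defined values are used). A weak triangulation of $(\chi,u)$ is a maximal non-crossing collection of segments with endpoints in $X\cup\{u,v\}$ not containing the segment $uv$. Every triangulation $\Delta$ of $\chi$ extends uniquely to a weak triangulation, its extension, obtained by adding all segments $vx$ ($x\in X$) crossing no segment of $\Delta$. The degree of a vertex in $\Delta$ is the number of segments of $\Delta$ incident to it. *)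

theory Defs
  imports Main
begin

text \<open>A chirotope on a finite set E: a map on ordered triples of distinct elements
  of E with values in {-1,1} (values on other triples are irrelevant), satisfying
  alternating symmetry, interiority and transitivity (Knuth's CC-system axioms).\<close>

definition chirotope :: "('a \<Rightarrow> 'a \<Rightarrow> 'a \<Rightarrow> int) \<Rightarrow> 'a set \<Rightarrow> bool" where
  "chirotope chi E \<longleftrightarrow> finite E \<and>
     (\<forall>a\<in>E. \<forall>b\<in>E. \<forall>c\<in>E. distinct [a,b,c] \<longrightarrow>
        chi a b c \<in> {-1, 1} \<and> chi a b c = chi b c a \<and> chi a c b = - chi a b c) \<and>
     (\<forall>p\<in>E. \<forall>q\<in>E. \<forall>r\<in>E. \<forall>t\<in>E. distinct [p,q,r,t] \<longrightarrow>
        chi t q r = 1 \<longrightarrow> chi p t r = 1 \<longrightarrow> chi p q t = 1 \<longrightarrow> chi p q r = 1) \<and>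
     (\<forall>p\<in>E. \<forall>q\<in>E. \<forall>r\<in>E. \<forall>s\<in>E. \<forall>t\<in>E. distinct [p,q,r,s,t] \<longrightarrow>
        chi t s p = 1 \<longrightarrow> chi t s q = 1 \<longrightarrow> chi t s r = 1 \<longrightarrow>
        chi t p q = 1 \<longrightarrow> chi t q r = 1 \<longrightarrow> chi t p r = 1)"

text \<open>Rooted chirotope (chi,u): chirotope on X \<union> {u}, u \<notin> X, u extreme.\<close>
definition rooted_chirotope :: "('a \<Rightarrow> 'a \<Rightarrow> 'a \<Rightarrow> int) \<Rightarrow> 'a set \<Rightarrow> 'a \<Rightarrow> bool" where
  "rooted_chirotope chi X u \<longleftrightarrow> u \<notin> X \<and> chirotope chi (insert u X) \<and>
     (\<exists>y\<in>X. \<exists>s. \<forall>z\<in>X - {y}. chi u y z = s)"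

definition segment :: "'a set \<Rightarrow> 'a set \<Rightarrow> bool" where
  "segment E s \<longleftrightarrow> (\<exists>x\<in>E. \<exists>y\<in>E. x \<noteq> y \<and> s = {x, y})"

definition crossing :: "('a \<Rightarrow> 'a \<Rightarrow> 'a \<Rightarrow> int) \<Rightarrow> 'a set \<Rightarrow> 'a set \<Rightarrow> bool" where
  "crossing chi s1 s2 \<longleftrightarrow> (\<exists>x y z t. s1 = {x, y} \<and> s2 = {z, t} \<and> distinct [x,y,z,t] \<and>
      chi x y z = - chi x y t \<and> chi z t x = - chi z t y)"

definition triangulation :: "('a \<Rightarrow> 'a \<Rightarrow> 'a \<Rightarrow> int) \<Rightarrow> 'a set \<Rightarrow> 'a set set \<Rightarrow> bool" where
  "triangulation chi E T \<longleftrightarrow>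
     (\<forall>s\<in>T. segment E s) \<and> (\<forall>s1\<in>T. \<forall>s2\<in>T. \<not> crossing chi s1 s2) \<and>
     (\<forall>s. segment E s \<and> s \<notin> T \<longrightarrow> (\<exists>s'\<in>T. crossing chi s s' \<or> crossing chi s' s))"

text \<open>Extension of chi by the new element v with chi(x,y,v) = -chi(x,y,u) for x,y in X,
  extended to all positions by alternating symmetry (chi(v,y,z) = chi(y,z,v),
  chi(x,v,z) = chi(z,x,v)).\<close>
definition chi_v :: "('a \<Rightarrow> 'a \<Rightarrow> 'a \<Rightarrow> int) \<Rightarrow> 'a \<Rightarrow> 'a \<Rightarrow> 'a \<Rightarrow> 'a \<Rightarrow> 'a \<Rightarrow> int" where
  "chi_v chi u v x y z =
     (if z = v then - chi x y u
      else if x = v then - chi y z u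
      else if y = v then - chi z x u
      else chi x y z)"

definition wcrossing :: "('a \<Rightarrow> 'a \<Rightarrow> 'a \<Rightarrow> int) \<Rightarrow> 'a \<Rightarrow> 'a \<Rightarrow> 'a set \<Rightarrow> 'a set \<Rightarrow> bool" where
  "wcrossing chi u v s1 s2 \<longleftrightarrow>
     \<not> (u \<in> s1 \<and> v \<in> s2) \<and> \<not> (v \<in> s1 \<and> u \<in> s2) \<and> crossing (chi_v chi u v) s1 s2"

definition weak_segment :: "'a set \<Rightarrow> 'a \<Rightarrow> 'a \<Rightarrow> 'a set \<Rightarrow> bool" where
  "weak_segment X u v s \<longleftrightarrow> segment (X \<union> {u, v}) s \<and> s \<noteq> {u, v}"

definition weak_triangulation ::
    "('a \<Rightarrow> 'a \<Rightarrow> 'a \<Rightarrow> int) \<Rightarrow> 'a set \<Rightarrow> 'a \<Rightarrow> 'a \<Rightarrow> 'a set set \<Rightarrow> bool" where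
  "weak_triangulation chi X u v D \<longleftrightarrow>
     (\<forall>s\<in>D. weak_segment X u v s) \<and> (\<forall>s1\<in>D. \<forall>s2\<in>D. \<not> wcrossing chi u v s1 s2) \<and>
     (\<forall>s. weak_segment X u v s \<and> s \<notin> D \<longrightarrow>
        (\<exists>s'\<in>D. wcrossing chi u v s s' \<or> wcrossing chi u v s' s))"

definition extension ::
    "('a \<Rightarrow> 'a \<Rightarrow> 'a \<Rightarrow> int) \<Rightarrow> 'a set \<Rightarrow> 'a \<Rightarrow> 'a \<Rightarrow> 'a set set \<Rightarrow> 'a set set" where
  "extension chi X u v T = T \<union>
     {{v, x} | x. x \<in> X \<and> (\<forall>s\<in>T. \<not> wcrossing chi u v {v, x} s \<and> \<not> wcrossing chi u v s {v, x})}"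

definition degree :: "'a set set \<Rightarrow> 'a \<Rightarrow> nat" where
  "degree D w = card {s \<in> D. w \<in> s}"

definition min_v_degree :: "('a \<Rightarrow> 'a \<Rightarrow> 'a \<Rightarrow> int) \<Rightarrow> 'a set \<Rightarrow> 'a \<Rightarrow> 'a \<Rightarrow> nat" where
  "min_v_degree chi X u v = Min {degree D v | D. weak_triangulation chi X u v D}"

end

theory Submission
  imports Defs
begin

lemma chir_val:
  assumes "chirotope chi E" "a \<in> E" "b \<in> E" "c \<in> E" "distinct [a,b,c]"
  shows "chi a b c = 1 \<or> chi a b c = -1"
  using assms unfolding chirotope_def by auto

lemma chir_perm:
  assumes "chirotope chi E" "a \<in> E" "b \<in> E" "c \<in> E" "a \<noteq> b" "a \<noteq> c" "b \<noteq> c"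
  shows "chi b c a = chi a b c \<and> chi c a b = chi a b c \<and> chi a c b = - chi a b c
     \<and> chi b a c = - chi a b c \<and> chi c b a = - chi a b c"
proof -
  have h: "\<And>a b c. a \<in> E \<Longrightarrow> b \<in> E \<Longrightarrow> c \<in> E \<Longrightarrow> distinct [a,b,c] \<Longrightarrow>
       chi a b c = chi b c a \<and> chi a c b = - chi a b c"
    using assms(1) unfolding chirotope_def by blast
  show ?thesis using h[of a b c] h[of b c a] h[of c a b] h[of b a c] assms by auto
qed

lemma chir_A4:
  assumes "chirotope chi E" "p \<in> E" "q \<in> E" "r \<in> E" "t \<in> E" "distinct [p,q,r,t]"
    "chi t q r = 1" "chi p t r = 1" "chi p q t = 1"
  shows "chi p q r = 1"
  using assms unfolding chirotope_def by blast

lemma chir_A5: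
  assumes "chirotope chi E" "p \<in> E" "q \<in> E" "r \<in> E" "s \<in> E" "t \<in> E" "distinct [p,q,r,s,t]"
    "chi t s p = 1" "chi t s q = 1" "chi t s r = 1" "chi t p q = 1" "chi t q r = 1"
  shows "chi t p r = 1"
  using assms unfolding chirotope_def by blast

lemma chir_A5_mirror:
  assumes ch: "chirotope chi E" and mem: "p \<in> E" "q \<in> E" "r \<in> E" "s \<in> E" "t \<in> E" and dist: "distinct [p,q,r,s,t]"
    and hyp: "chi t p s = 1" "chi t q s = 1" "chi t r s = 1" "chi t q p = 1" "chi t r q = 1"
  shows "chi t r p = 1"
proof -
  have v0: "chi p q r = 1 \<or> chi p q r = -1" using chir_val[OF ch, of p q r] mem dist by simp
  have p0: "chi q r p = chi p q r \<and> chi r p q = chi p q r \<and> chi p r q = - chi p q r \<and> chi q p r = - chi p q r \<and> chi r q p = - chi p q r" using chir_perm[OF ch, of p q r] mem dist by simp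
  have v1: "chi p q s = 1 \<or> chi p q s = -1" using chir_val[OF ch, of p q s] mem dist by simp
  have p1: "chi q s p = chi p q s \<and> chi s p q = chi p q s \<and> chi p s q = - chi p q s \<and> chi q p s = - chi p q s \<and> chi s q p = - chi p q s" using chir_perm[OF ch, of p q s] mem dist by simp
  have v2: "chi p q t = 1 \<or> chi p q t = -1" using chir_val[OF ch, of p q t] mem dist by simp
  have p2: "chi q t p = chi p q t \<and> chi t p q = chi p q t \<and> chi p t q = - chi p q t \<and> chi q p t = - chi p q t \<and> chi t q p = - chi p q t" using chir_perm[OF ch, of p q t] mem dist by simp
  have v3: "chi p r s = 1 \<or> chi p r s = -1" using chir_val[OF ch, of p r s] mem dist by simp
  have p3: "chi r s p = chi p r s \<and> chi s p r = chi p r s \<and> chi p s r = - chi p r s \<and> chi r p s = - chi p r s \<and> chi s r p = - chi p r s" using chir_perm[OF ch, of p r s] mem dist by simp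
  have v4: "chi p r t = 1 \<or> chi p r t = -1" using chir_val[OF ch, of p r t] mem dist by simp
  have p4: "chi r t p = chi p r t \<and> chi t p r = chi p r t \<and> chi p t r = - chi p r t \<and> chi r p t = - chi p r t \<and> chi t r p = - chi p r t" using chir_perm[OF ch, of p r t] mem dist by simp
  have v5: "chi p s t = 1 \<or> chi p s t = -1" using chir_val[OF ch, of p s t] mem dist by simp
  have p5: "chi s t p = chi p s t \<and> chi t p s = chi p s t \<and> chi p t s = - chi p s t \<and> chi s p t = - chi p s t \<and> chi t s p = - chi p s t" using chir_perm[OF ch, of p s t] mem dist by simp
  have v6: "chi q r s = 1 \<or> chi q r s = -1" using chir_val[OF ch, of q r s] mem dist by simp
  have p6: "chi r s q = chi q r s \<and> chi s q r = chi q r s \<and> chi q s r = - chi q r s \<and> chi r q s = - chi q r s \<and> chi s r q = - chi q r s" using chir_perm[OF ch, of q r s] mem dist by simp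
  have v7: "chi q r t = 1 \<or> chi q r t = -1" using chir_val[OF ch, of q r t] mem dist by simp
  have p7: "chi r t q = chi q r t \<and> chi t q r = chi q r t \<and> chi q t r = - chi q r t \<and> chi r q t = - chi q r t \<and> chi t r q = - chi q r t" using chir_perm[OF ch, of q r t] mem dist by simp
  have v8: "chi q s t = 1 \<or> chi q s t = -1" using chir_val[OF ch, of q s t] mem dist by simp
  have p8: "chi s t q = chi q s t \<and> chi t q s = chi q s t \<and> chi q t s = - chi q s t \<and> chi s q t = - chi q s t \<and> chi t s q = - chi q s t" using chir_perm[OF ch, of q s t] mem dist by simp
  have v9: "chi r s t = 1 \<or> chi r s t = -1" using chir_val[OF ch, of r s t] mem dist by simp
  have p9: "chi s t r = chi r s t \<and> chi t r s = chi r s t \<and> chi r t s = - chi r s t \<and> chi s r t = - chi r s t \<and> chi t s r = - chi r s t" using chir_perm[OF ch, of r s t] mem dist by simp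
  have i0: "chi r q t = 1 \<Longrightarrow> chi p r t = 1 \<Longrightarrow> chi p q r = 1 \<Longrightarrow> chi p q t = 1" using chir_A4[OF ch, of p q t r] mem dist by auto
  have i1: "chi q r s = 1 \<Longrightarrow> chi p q s = 1 \<Longrightarrow> chi p r q = 1 \<Longrightarrow> chi p r s = 1" using chir_A4[OF ch, of p r s q] mem dist by auto
  have i2: "chi s t p = 1 \<Longrightarrow> chi s t r = 1 \<Longrightarrow> chi s t q = 1 \<Longrightarrow> chi s p r = 1 \<Longrightarrow> chi s r q = 1 \<Longrightarrow> chi s p q = 1" using chir_A5[OF ch, of p r q t s] mem dist by auto
  have i3: "chi r q p = 1 \<Longrightarrow> chi r q s = 1 \<Longrightarrow> chi r q t = 1 \<Longrightarrow> chi r p s = 1 \<Longrightarrow> chi r s t = 1 \<Longrightarrow> chi r p t = 1" using chir_A5[OF ch, of p s t q r] mem dist by auto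
  have i4: "chi p r q = 1 \<Longrightarrow> chi p r s = 1 \<Longrightarrow> chi p r t = 1 \<Longrightarrow> chi p q s = 1 \<Longrightarrow> chi p s t = 1 \<Longrightarrow> chi p q t = 1" using chir_A5[OF ch, of q s t r p] mem dist by auto
  have i5: "chi q p r = 1 \<Longrightarrow> chi q p s = 1 \<Longrightarrow> chi q p t = 1 \<Longrightarrow> chi q r s = 1 \<Longrightarrow> chi q s t = 1 \<Longrightarrow> chi q r t = 1" using chir_A5[OF ch, of r s t p q] mem dist by auto
  show ?thesis using v0 p0 v1 p1 v2 p2 v3 p3 v4 p4 v5 p5 v6 p6 v7 p7 v8 p8 v9 p9 i0 i1 i2 i3 i4 i5 hyp by smt
qed


lemma chir_neg:
  assumes ch: "chirotope chi E"
  shows "chirotope (\<lambda>a b c. - chi a b c) E"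
proof -
  have f: "finite E" using ch unfolding chirotope_def by blast
  have s1: "\<forall>a\<in>E. \<forall>b\<in>E. \<forall>c\<in>E. distinct [a,b,c] \<longrightarrow>
        - chi a b c \<in> {-1, 1} \<and> - chi a b c = - chi b c a \<and> - chi a c b = - (- chi a b c)"
    using ch unfolding chirotope_def by auto
  have s2: "\<forall>p\<in>E. \<forall>q\<in>E. \<forall>r\<in>E. \<forall>t\<in>E. distinct [p,q,r,t] \<longrightarrow>
        - chi t q r = 1 \<longrightarrow> - chi p t r = 1 \<longrightarrow> - chi p q t = 1 \<longrightarrow> - chi p q r = 1"
  proof (intro ballI impI)
    fix p q r t assume m: "p \<in> E" "q \<in> E" "r \<in> E" "t \<in> E" and d: "distinct [p,q,r,t]"
      and h: "- chi t q r = 1" "- chi p t r = 1" "- chi p q t = 1"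
    have "chi t r q = 1" using chir_perm[OF ch, of t q r] m d h by auto
    moreover have "chi p t q = 1" using chir_perm[OF ch, of p q t] m d h by auto
    moreover have "chi p r t = 1" using chir_perm[OF ch, of p t r] m d h by auto
    ultimately have "chi p r q = 1" using chir_A4[OF ch, of p r q t] m d by auto
    then show "- chi p q r = 1" using chir_perm[OF ch, of p q r] m d by auto
  qed
  have s3: "\<forall>p\<in>E. \<forall>q\<in>E. \<forall>r\<in>E. \<forall>s\<in>E. \<forall>t\<in>E. distinct [p,q,r,s,t] \<longrightarrow>
        - chi t s p = 1 \<longrightarrow> - chi t s q = 1 \<longrightarrow> - chi t s r = 1 \<longrightarrow>
        - chi t p q = 1 \<longrightarrow> - chi t q r = 1 \<longrightarrow> - chi t p r = 1"
  proof (intro ballI impI)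
    fix p q r s t assume m: "p \<in> E" "q \<in> E" "r \<in> E" "s \<in> E" "t \<in> E" and d: "distinct [p,q,r,s,t]"
      and h: "- chi t s p = 1" "- chi t s q = 1" "- chi t s r = 1" "- chi t p q = 1" "- chi t q r = 1"
    have "chi t p s = 1" using chir_perm[OF ch, of t s p] m d h by auto
    moreover have "chi t q s = 1" using chir_perm[OF ch, of t s q] m d h by auto
    moreover have "chi t r s = 1" using chir_perm[OF ch, of t s r] m d h by auto
    moreover have "chi t q p = 1" using chir_perm[OF ch, of t p q] m d h by auto
    moreover have "chi t r q = 1" using chir_perm[OF ch, of t q r] m d h by auto
    ultimately have "chi t r p = 1" using chir_A5_mirror[OF ch, of p q r s t] m d by auto
    then show "- chi t p r = 1" using chir_perm[OF ch, of t p r] m d by auto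
  qed
  show ?thesis unfolding chirotope_def using f s1 s2 s3 by blast
qed

lemma cfgC0:
  assumes ch: "chirotope chi E" and mem: "u \<in> E" "a \<in> E" "x \<in> E" "b \<in> E" "y \<in> E" and dist: "distinct [u,a,x,b,y]"
    and hyp: "chi u a x = 1" "chi u a b = 1" "chi u a y = 1" "chi u x b = 1" "chi u x y = 1" "chi u b y = 1" "chi x y a = 1" "chi x y b = 1" "chi a b x = 1"
  shows "False"
proof -
  have v0: "chi u a x = 1 \<or> chi u a x = -1" using chir_val[OF ch, of u a x] mem dist by simp
  have p0: "chi a x u = chi u a x \<and> chi x u a = chi u a x \<and> chi u x a = - chi u a x \<and> chi a u x = - chi u a x \<and> chi x a u = - chi u a x" using chir_perm[OF ch, of u a x] mem dist by simp
  have v1: "chi u a b = 1 \<or> chi u a b = -1" using chir_val[OF ch, of u a b] mem dist by simp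
  have p1: "chi a b u = chi u a b \<and> chi b u a = chi u a b \<and> chi u b a = - chi u a b \<and> chi a u b = - chi u a b \<and> chi b a u = - chi u a b" using chir_perm[OF ch, of u a b] mem dist by simp
  have v2: "chi u a y = 1 \<or> chi u a y = -1" using chir_val[OF ch, of u a y] mem dist by simp
  have p2: "chi a y u = chi u a y \<and> chi y u a = chi u a y \<and> chi u y a = - chi u a y \<and> chi a u y = - chi u a y \<and> chi y a u = - chi u a y" using chir_perm[OF ch, of u a y] mem dist by simp
  have v3: "chi u x b = 1 \<or> chi u x b = -1" using chir_val[OF ch, of u x b] mem dist by simp
  have p3: "chi x b u = chi u x b \<and> chi b u x = chi u x b \<and> chi u b x = - chi u x b \<and> chi x u b = - chi u x b \<and> chi b x u = - chi u x b" using chir_perm[OF ch, of u x b] mem dist by simp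
  have v4: "chi u x y = 1 \<or> chi u x y = -1" using chir_val[OF ch, of u x y] mem dist by simp
  have p4: "chi x y u = chi u x y \<and> chi y u x = chi u x y \<and> chi u y x = - chi u x y \<and> chi x u y = - chi u x y \<and> chi y x u = - chi u x y" using chir_perm[OF ch, of u x y] mem dist by simp
  have v5: "chi u b y = 1 \<or> chi u b y = -1" using chir_val[OF ch, of u b y] mem dist by simp
  have p5: "chi b y u = chi u b y \<and> chi y u b = chi u b y \<and> chi u y b = - chi u b y \<and> chi b u y = - chi u b y \<and> chi y b u = - chi u b y" using chir_perm[OF ch, of u b y] mem dist by simp
  have v6: "chi a x b = 1 \<or> chi a x b = -1" using chir_val[OF ch, of a x b] mem dist by simp
  have p6: "chi x b a = chi a x b \<and> chi b a x = chi a x b \<and> chi a b x = - chi a x b \<and> chi x a b = - chi a x b \<and> chi b x a = - chi a x b" using chir_perm[OF ch, of a x b] mem dist by simp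
  have v7: "chi a x y = 1 \<or> chi a x y = -1" using chir_val[OF ch, of a x y] mem dist by simp
  have p7: "chi x y a = chi a x y \<and> chi y a x = chi a x y \<and> chi a y x = - chi a x y \<and> chi x a y = - chi a x y \<and> chi y x a = - chi a x y" using chir_perm[OF ch, of a x y] mem dist by simp
  have v8: "chi a b y = 1 \<or> chi a b y = -1" using chir_val[OF ch, of a b y] mem dist by simp
  have p8: "chi b y a = chi a b y \<and> chi y a b = chi a b y \<and> chi a y b = - chi a b y \<and> chi b a y = - chi a b y \<and> chi y b a = - chi a b y" using chir_perm[OF ch, of a b y] mem dist by simp
  have v9: "chi x b y = 1 \<or> chi x b y = -1" using chir_val[OF ch, of x b y] mem dist by simp
  have p9: "chi b y x = chi x b y \<and> chi y x b = chi x b y \<and> chi x y b = - chi x b y \<and> chi b x y = - chi x b y \<and> chi y b x = - chi x b y" using chir_perm[OF ch, of x b y] mem dist by simp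
  have i0: "chi x y u = 1 \<Longrightarrow> chi x y a = 1 \<Longrightarrow> chi x y b = 1 \<Longrightarrow> chi x u a = 1 \<Longrightarrow> chi x a b = 1 \<Longrightarrow> chi x u b = 1" using chir_A5[OF ch, of u a b y x] mem dist by auto
  show ?thesis using v0 p0 v1 p1 v2 p2 v3 p3 v4 p4 v5 p5 v6 p6 v7 p7 v8 p8 v9 p9 i0 hyp by smt
qed

lemma cfgC2:
  assumes ch: "chirotope chi E" and mem: "u \<in> E" "a \<in> E" "x \<in> E" "c \<in> E" "y \<in> E" and dist: "distinct [u,a,x,c,y]"
    and hyp: "chi u a x = 1" "chi u a c = 1" "chi u a y = 1" "chi u x c = 1" "chi u x y = 1" "chi u c y = 1" "chi a y x = 1" "chi c y a = 1" "chi c y x = 1"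
  shows "chi a c x = 1"
proof -
  have v0: "chi u a x = 1 \<or> chi u a x = -1" using chir_val[OF ch, of u a x] mem dist by simp
  have p0: "chi a x u = chi u a x \<and> chi x u a = chi u a x \<and> chi u x a = - chi u a x \<and> chi a u x = - chi u a x \<and> chi x a u = - chi u a x" using chir_perm[OF ch, of u a x] mem dist by simp
  have v1: "chi u a c = 1 \<or> chi u a c = -1" using chir_val[OF ch, of u a c] mem dist by simp
  have p1: "chi a c u = chi u a c \<and> chi c u a = chi u a c \<and> chi u c a = - chi u a c \<and> chi a u c = - chi u a c \<and> chi c a u = - chi u a c" using chir_perm[OF ch, of u a c] mem dist by simp
  have v2: "chi u a y = 1 \<or> chi u a y = -1" using chir_val[OF ch, of u a y] mem dist by simp
  have p2: "chi a y u = chi u a y \<and> chi y u a = chi u a y \<and> chi u y a = - chi u a y \<and> chi a u y = - chi u a y \<and> chi y a u = - chi u a y" using chir_perm[OF ch, of u a y] mem dist by simp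
  have v3: "chi u x c = 1 \<or> chi u x c = -1" using chir_val[OF ch, of u x c] mem dist by simp
  have p3: "chi x c u = chi u x c \<and> chi c u x = chi u x c \<and> chi u c x = - chi u x c \<and> chi x u c = - chi u x c \<and> chi c x u = - chi u x c" using chir_perm[OF ch, of u x c] mem dist by simp
  have v4: "chi u x y = 1 \<or> chi u x y = -1" using chir_val[OF ch, of u x y] mem dist by simp
  have p4: "chi x y u = chi u x y \<and> chi y u x = chi u x y \<and> chi u y x = - chi u x y \<and> chi x u y = - chi u x y \<and> chi y x u = - chi u x y" using chir_perm[OF ch, of u x y] mem dist by simp
  have v5: "chi u c y = 1 \<or> chi u c y = -1" using chir_val[OF ch, of u c y] mem dist by simp
  have p5: "chi c y u = chi u c y \<and> chi y u c = chi u c y \<and> chi u y c = - chi u c y \<and> chi c u y = - chi u c y \<and> chi y c u = - chi u c y" using chir_perm[OF ch, of u c y] mem dist by simp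
  have v6: "chi a x c = 1 \<or> chi a x c = -1" using chir_val[OF ch, of a x c] mem dist by simp
  have p6: "chi x c a = chi a x c \<and> chi c a x = chi a x c \<and> chi a c x = - chi a x c \<and> chi x a c = - chi a x c \<and> chi c x a = - chi a x c" using chir_perm[OF ch, of a x c] mem dist by simp
  have v7: "chi a x y = 1 \<or> chi a x y = -1" using chir_val[OF ch, of a x y] mem dist by simp
  have p7: "chi x y a = chi a x y \<and> chi y a x = chi a x y \<and> chi a y x = - chi a x y \<and> chi x a y = - chi a x y \<and> chi y x a = - chi a x y" using chir_perm[OF ch, of a x y] mem dist by simp
  have v8: "chi a c y = 1 \<or> chi a c y = -1" using chir_val[OF ch, of a c y] mem dist by simp
  have p8: "chi c y a = chi a c y \<and> chi y a c = chi a c y \<and> chi a y c = - chi a c y \<and> chi c a y = - chi a c y \<and> chi y c a = - chi a c y" using chir_perm[OF ch, of a c y] mem dist by simp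
  have v9: "chi x c y = 1 \<or> chi x c y = -1" using chir_val[OF ch, of x c y] mem dist by simp
  have p9: "chi c y x = chi x c y \<and> chi y x c = chi x c y \<and> chi x y c = - chi x c y \<and> chi c x y = - chi x c y \<and> chi y c x = - chi x c y" using chir_perm[OF ch, of x c y] mem dist by simp
  have i0: "chi x c u = 1 \<Longrightarrow> chi x c a = 1 \<Longrightarrow> chi x c y = 1 \<Longrightarrow> chi x u a = 1 \<Longrightarrow> chi x a y = 1 \<Longrightarrow> chi x u y = 1" using chir_A5[OF ch, of u a y c x] mem dist by auto
  show ?thesis using v0 p0 v1 p1 v2 p2 v3 p3 v4 p4 v5 p5 v6 p6 v7 p7 v8 p8 v9 p9 i0 hyp by smt
qed

lemma cfgC3:
  assumes ch: "chirotope chi E" and mem: "u \<in> E" "a \<in> E" "x \<in> E" "c \<in> E" "b \<in> E" "y \<in> E" and dist: "distinct [u,a,x,c,b,y]"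
    and hyp: "chi u a x = 1" "chi u a c = 1" "chi u a b = 1" "chi u a y = 1" "chi u x c = 1" "chi u x b = 1" "chi u x y = 1" "chi u c b = 1" "chi u c y = 1" "chi u b y = 1" "chi a b x = 1" "chi c y a = 1" "chi c y b = 1" "chi c y x = 1"
  shows "chi a c x = 1"
proof -
  have v0: "chi u a x = 1 \<or> chi u a x = -1" using chir_val[OF ch, of u a x] mem dist by simp
  have p0: "chi a x u = chi u a x \<and> chi x u a = chi u a x \<and> chi u x a = - chi u a x \<and> chi a u x = - chi u a x \<and> chi x a u = - chi u a x" using chir_perm[OF ch, of u a x] mem dist by simp
  have v1: "chi u a c = 1 \<or> chi u a c = -1" using chir_val[OF ch, of u a c] mem dist by simp
  have p1: "chi a c u = chi u a c \<and> chi c u a = chi u a c \<and> chi u c a = - chi u a c \<and> chi a u c = - chi u a c \<and> chi c a u = - chi u a c" using chir_perm[OF ch, of u a c] mem dist by simp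
  have v2: "chi u a b = 1 \<or> chi u a b = -1" using chir_val[OF ch, of u a b] mem dist by simp
  have p2: "chi a b u = chi u a b \<and> chi b u a = chi u a b \<and> chi u b a = - chi u a b \<and> chi a u b = - chi u a b \<and> chi b a u = - chi u a b" using chir_perm[OF ch, of u a b] mem dist by simp
  have v3: "chi u a y = 1 \<or> chi u a y = -1" using chir_val[OF ch, of u a y] mem dist by simp
  have p3: "chi a y u = chi u a y \<and> chi y u a = chi u a y \<and> chi u y a = - chi u a y \<and> chi a u y = - chi u a y \<and> chi y a u = - chi u a y" using chir_perm[OF ch, of u a y] mem dist by simp
  have v4: "chi u x c = 1 \<or> chi u x c = -1" using chir_val[OF ch, of u x c] mem dist by simp
  have p4: "chi x c u = chi u x c \<and> chi c u x = chi u x c \<and> chi u c x = - chi u x c \<and> chi x u c = - chi u x c \<and> chi c x u = - chi u x c" using chir_perm[OF ch, of u x c] mem dist by simp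
  have v5: "chi u x b = 1 \<or> chi u x b = -1" using chir_val[OF ch, of u x b] mem dist by simp
  have p5: "chi x b u = chi u x b \<and> chi b u x = chi u x b \<and> chi u b x = - chi u x b \<and> chi x u b = - chi u x b \<and> chi b x u = - chi u x b" using chir_perm[OF ch, of u x b] mem dist by simp
  have v6: "chi u x y = 1 \<or> chi u x y = -1" using chir_val[OF ch, of u x y] mem dist by simp
  have p6: "chi x y u = chi u x y \<and> chi y u x = chi u x y \<and> chi u y x = - chi u x y \<and> chi x u y = - chi u x y \<and> chi y x u = - chi u x y" using chir_perm[OF ch, of u x y] mem dist by simp
  have v7: "chi u c b = 1 \<or> chi u c b = -1" using chir_val[OF ch, of u c b] mem dist by simp
  have p7: "chi c b u = chi u c b \<and> chi b u c = chi u c b \<and> chi u b c = - chi u c b \<and> chi c u b = - chi u c b \<and> chi b c u = - chi u c b" using chir_perm[OF ch, of u c b] mem dist by simp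
  have v8: "chi u c y = 1 \<or> chi u c y = -1" using chir_val[OF ch, of u c y] mem dist by simp
  have p8: "chi c y u = chi u c y \<and> chi y u c = chi u c y \<and> chi u y c = - chi u c y \<and> chi c u y = - chi u c y \<and> chi y c u = - chi u c y" using chir_perm[OF ch, of u c y] mem dist by simp
  have v9: "chi u b y = 1 \<or> chi u b y = -1" using chir_val[OF ch, of u b y] mem dist by simp
  have p9: "chi b y u = chi u b y \<and> chi y u b = chi u b y \<and> chi u y b = - chi u b y \<and> chi b u y = - chi u b y \<and> chi y b u = - chi u b y" using chir_perm[OF ch, of u b y] mem dist by simp
  have v10: "chi a x c = 1 \<or> chi a x c = -1" using chir_val[OF ch, of a x c] mem dist by simp
  have p10: "chi x c a = chi a x c \<and> chi c a x = chi a x c \<and> chi a c x = - chi a x c \<and> chi x a c = - chi a x c \<and> chi c x a = - chi a x c" using chir_perm[OF ch, of a x c] mem dist by simp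
  have v11: "chi a x b = 1 \<or> chi a x b = -1" using chir_val[OF ch, of a x b] mem dist by simp
  have p11: "chi x b a = chi a x b \<and> chi b a x = chi a x b \<and> chi a b x = - chi a x b \<and> chi x a b = - chi a x b \<and> chi b x a = - chi a x b" using chir_perm[OF ch, of a x b] mem dist by simp
  have v12: "chi a x y = 1 \<or> chi a x y = -1" using chir_val[OF ch, of a x y] mem dist by simp
  have p12: "chi x y a = chi a x y \<and> chi y a x = chi a x y \<and> chi a y x = - chi a x y \<and> chi x a y = - chi a x y \<and> chi y x a = - chi a x y" using chir_perm[OF ch, of a x y] mem dist by simp
  have v13: "chi a c b = 1 \<or> chi a c b = -1" using chir_val[OF ch, of a c b] mem dist by simp
  have p13: "chi c b a = chi a c b \<and> chi b a c = chi a c b \<and> chi a b c = - chi a c b \<and> chi c a b = - chi a c b \<and> chi b c a = - chi a c b" using chir_perm[OF ch, of a c b] mem dist by simp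
  have v14: "chi a c y = 1 \<or> chi a c y = -1" using chir_val[OF ch, of a c y] mem dist by simp
  have p14: "chi c y a = chi a c y \<and> chi y a c = chi a c y \<and> chi a y c = - chi a c y \<and> chi c a y = - chi a c y \<and> chi y c a = - chi a c y" using chir_perm[OF ch, of a c y] mem dist by simp
  have v15: "chi a b y = 1 \<or> chi a b y = -1" using chir_val[OF ch, of a b y] mem dist by simp
  have p15: "chi b y a = chi a b y \<and> chi y a b = chi a b y \<and> chi a y b = - chi a b y \<and> chi b a y = - chi a b y \<and> chi y b a = - chi a b y" using chir_perm[OF ch, of a b y] mem dist by simp
  have v16: "chi x c b = 1 \<or> chi x c b = -1" using chir_val[OF ch, of x c b] mem dist by simp
  have p16: "chi c b x = chi x c b \<and> chi b x c = chi x c b \<and> chi x b c = - chi x c b \<and> chi c x b = - chi x c b \<and> chi b c x = - chi x c b" using chir_perm[OF ch, of x c b] mem dist by simp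
  have v17: "chi x c y = 1 \<or> chi x c y = -1" using chir_val[OF ch, of x c y] mem dist by simp
  have p17: "chi c y x = chi x c y \<and> chi y x c = chi x c y \<and> chi x y c = - chi x c y \<and> chi c x y = - chi x c y \<and> chi y c x = - chi x c y" using chir_perm[OF ch, of x c y] mem dist by simp
  have v18: "chi x b y = 1 \<or> chi x b y = -1" using chir_val[OF ch, of x b y] mem dist by simp
  have p18: "chi b y x = chi x b y \<and> chi y x b = chi x b y \<and> chi x y b = - chi x b y \<and> chi b x y = - chi x b y \<and> chi y b x = - chi x b y" using chir_perm[OF ch, of x b y] mem dist by simp
  have v19: "chi c b y = 1 \<or> chi c b y = -1" using chir_val[OF ch, of c b y] mem dist by simp
  have p19: "chi b y c = chi c b y \<and> chi y c b = chi c b y \<and> chi c y b = - chi c b y \<and> chi b c y = - chi c b y \<and> chi y b c = - chi c b y" using chir_perm[OF ch, of c b y] mem dist by simp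
  have i0: "chi x c u = 1 \<Longrightarrow> chi x c a = 1 \<Longrightarrow> chi x c b = 1 \<Longrightarrow> chi x u a = 1 \<Longrightarrow> chi x a b = 1 \<Longrightarrow> chi x u b = 1" using chir_A5[OF ch, of u a b c x] mem dist by auto
  have i1: "chi c y u = 1 \<Longrightarrow> chi c y x = 1 \<Longrightarrow> chi c y b = 1 \<Longrightarrow> chi c u x = 1 \<Longrightarrow> chi c x b = 1 \<Longrightarrow> chi c u b = 1" using chir_A5[OF ch, of u x b y c] mem dist by auto
  show ?thesis using v0 p0 v1 p1 v2 p2 v3 p3 v4 p4 v5 p5 v6 p6 v7 p7 v8 p8 v9 p9 v10 p10 v11 p11 v12 p12 v13 p13 v14 p14 v15 p15 v16 p16 v17 p17 v18 p18 v19 p19 i0 i1 hyp by smt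
qed

lemma cfgC4:
  assumes ch: "chirotope chi E" and mem: "u \<in> E" "c \<in> E" "e \<in> E" "q \<in> E" "y \<in> E" and dist: "distinct [u,c,e,q,y]"
    and hyp: "chi u c e = 1" "chi u c q = 1" "chi u c y = 1" "chi u e q = 1" "chi u e y = 1" "chi u q y = 1" "chi e y q = 1" "chi e y c = 1"
  shows "chi c e q = 1"
proof -
  have v0: "chi u c e = 1 \<or> chi u c e = -1" using chir_val[OF ch, of u c e] mem dist by simp
  have p0: "chi c e u = chi u c e \<and> chi e u c = chi u c e \<and> chi u e c = - chi u c e \<and> chi c u e = - chi u c e \<and> chi e c u = - chi u c e" using chir_perm[OF ch, of u c e] mem dist by simp
  have v1: "chi u c q = 1 \<or> chi u c q = -1" using chir_val[OF ch, of u c q] mem dist by simp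
  have p1: "chi c q u = chi u c q \<and> chi q u c = chi u c q \<and> chi u q c = - chi u c q \<and> chi c u q = - chi u c q \<and> chi q c u = - chi u c q" using chir_perm[OF ch, of u c q] mem dist by simp
  have v2: "chi u c y = 1 \<or> chi u c y = -1" using chir_val[OF ch, of u c y] mem dist by simp
  have p2: "chi c y u = chi u c y \<and> chi y u c = chi u c y \<and> chi u y c = - chi u c y \<and> chi c u y = - chi u c y \<and> chi y c u = - chi u c y" using chir_perm[OF ch, of u c y] mem dist by simp
  have v3: "chi u e q = 1 \<or> chi u e q = -1" using chir_val[OF ch, of u e q] mem dist by simp
  have p3: "chi e q u = chi u e q \<and> chi q u e = chi u e q \<and> chi u q e = - chi u e q \<and> chi e u q = - chi u e q \<and> chi q e u = - chi u e q" using chir_perm[OF ch, of u e q] mem dist by simp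
  have v4: "chi u e y = 1 \<or> chi u e y = -1" using chir_val[OF ch, of u e y] mem dist by simp
  have p4: "chi e y u = chi u e y \<and> chi y u e = chi u e y \<and> chi u y e = - chi u e y \<and> chi e u y = - chi u e y \<and> chi y e u = - chi u e y" using chir_perm[OF ch, of u e y] mem dist by simp
  have v5: "chi u q y = 1 \<or> chi u q y = -1" using chir_val[OF ch, of u q y] mem dist by simp
  have p5: "chi q y u = chi u q y \<and> chi y u q = chi u q y \<and> chi u y q = - chi u q y \<and> chi q u y = - chi u q y \<and> chi y q u = - chi u q y" using chir_perm[OF ch, of u q y] mem dist by simp
  have v6: "chi c e q = 1 \<or> chi c e q = -1" using chir_val[OF ch, of c e q] mem dist by simp
  have p6: "chi e q c = chi c e q \<and> chi q c e = chi c e q \<and> chi c q e = - chi c e q \<and> chi e c q = - chi c e q \<and> chi q e c = - chi c e q" using chir_perm[OF ch, of c e q] mem dist by simp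
  have v7: "chi c e y = 1 \<or> chi c e y = -1" using chir_val[OF ch, of c e y] mem dist by simp
  have p7: "chi e y c = chi c e y \<and> chi y c e = chi c e y \<and> chi c y e = - chi c e y \<and> chi e c y = - chi c e y \<and> chi y e c = - chi c e y" using chir_perm[OF ch, of c e y] mem dist by simp
  have v8: "chi c q y = 1 \<or> chi c q y = -1" using chir_val[OF ch, of c q y] mem dist by simp
  have p8: "chi q y c = chi c q y \<and> chi y c q = chi c q y \<and> chi c y q = - chi c q y \<and> chi q c y = - chi c q y \<and> chi y q c = - chi c q y" using chir_perm[OF ch, of c q y] mem dist by simp
  have v9: "chi e q y = 1 \<or> chi e q y = -1" using chir_val[OF ch, of e q y] mem dist by simp
  have p9: "chi q y e = chi e q y \<and> chi y e q = chi e q y \<and> chi e y q = - chi e q y \<and> chi q e y = - chi e q y \<and> chi y q e = - chi e q y" using chir_perm[OF ch, of e q y] mem dist by simp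
  have i0: "chi e y u = 1 \<Longrightarrow> chi e y c = 1 \<Longrightarrow> chi e y q = 1 \<Longrightarrow> chi e u c = 1 \<Longrightarrow> chi e c q = 1 \<Longrightarrow> chi e u q = 1" using chir_A5[OF ch, of u c q y e] mem dist by auto
  show ?thesis using v0 p0 v1 p1 v2 p2 v3 p3 v4 p4 v5 p5 v6 p6 v7 p7 v8 p8 v9 p9 i0 hyp by smt
qed

lemma cfgC5:
  assumes ch: "chirotope chi E" and mem: "u \<in> E" "c \<in> E" "d \<in> E" "e \<in> E" "y \<in> E" and dist: "distinct [u,c,d,e,y]"
    and hyp: "chi u c d = 1" "chi u c e = 1" "chi u c y = 1" "chi u d e = 1" "chi u d y = 1" "chi u e y = 1" "chi c d e = 1" "chi e y c = 1" "chi e y d = 1"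
  shows "chi c d y = 1"
proof -
  have v0: "chi u c d = 1 \<or> chi u c d = -1" using chir_val[OF ch, of u c d] mem dist by simp
  have p0: "chi c d u = chi u c d \<and> chi d u c = chi u c d \<and> chi u d c = - chi u c d \<and> chi c u d = - chi u c d \<and> chi d c u = - chi u c d" using chir_perm[OF ch, of u c d] mem dist by simp
  have v1: "chi u c e = 1 \<or> chi u c e = -1" using chir_val[OF ch, of u c e] mem dist by simp
  have p1: "chi c e u = chi u c e \<and> chi e u c = chi u c e \<and> chi u e c = - chi u c e \<and> chi c u e = - chi u c e \<and> chi e c u = - chi u c e" using chir_perm[OF ch, of u c e] mem dist by simp
  have v2: "chi u c y = 1 \<or> chi u c y = -1" using chir_val[OF ch, of u c y] mem dist by simp
  have p2: "chi c y u = chi u c y \<and> chi y u c = chi u c y \<and> chi u y c = - chi u c y \<and> chi c u y = - chi u c y \<and> chi y c u = - chi u c y" using chir_perm[OF ch, of u c y] mem dist by simp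
  have v3: "chi u d e = 1 \<or> chi u d e = -1" using chir_val[OF ch, of u d e] mem dist by simp
  have p3: "chi d e u = chi u d e \<and> chi e u d = chi u d e \<and> chi u e d = - chi u d e \<and> chi d u e = - chi u d e \<and> chi e d u = - chi u d e" using chir_perm[OF ch, of u d e] mem dist by simp
  have v4: "chi u d y = 1 \<or> chi u d y = -1" using chir_val[OF ch, of u d y] mem dist by simp
  have p4: "chi d y u = chi u d y \<and> chi y u d = chi u d y \<and> chi u y d = - chi u d y \<and> chi d u y = - chi u d y \<and> chi y d u = - chi u d y" using chir_perm[OF ch, of u d y] mem dist by simp
  have v5: "chi u e y = 1 \<or> chi u e y = -1" using chir_val[OF ch, of u e y] mem dist by simp
  have p5: "chi e y u = chi u e y \<and> chi y u e = chi u e y \<and> chi u y e = - chi u e y \<and> chi e u y = - chi u e y \<and> chi y e u = - chi u e y" using chir_perm[OF ch, of u e y] mem dist by simp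
  have v6: "chi c d e = 1 \<or> chi c d e = -1" using chir_val[OF ch, of c d e] mem dist by simp
  have p6: "chi d e c = chi c d e \<and> chi e c d = chi c d e \<and> chi c e d = - chi c d e \<and> chi d c e = - chi c d e \<and> chi e d c = - chi c d e" using chir_perm[OF ch, of c d e] mem dist by simp
  have v7: "chi c d y = 1 \<or> chi c d y = -1" using chir_val[OF ch, of c d y] mem dist by simp
  have p7: "chi d y c = chi c d y \<and> chi y c d = chi c d y \<and> chi c y d = - chi c d y \<and> chi d c y = - chi c d y \<and> chi y d c = - chi c d y" using chir_perm[OF ch, of c d y] mem dist by simp
  have v8: "chi c e y = 1 \<or> chi c e y = -1" using chir_val[OF ch, of c e y] mem dist by simp
  have p8: "chi e y c = chi c e y \<and> chi y c e = chi c e y \<and> chi c y e = - chi c e y \<and> chi e c y = - chi c e y \<and> chi y e c = - chi c e y" using chir_perm[OF ch, of c e y] mem dist by simp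
  have v9: "chi d e y = 1 \<or> chi d e y = -1" using chir_val[OF ch, of d e y] mem dist by simp
  have p9: "chi e y d = chi d e y \<and> chi y d e = chi d e y \<and> chi d y e = - chi d e y \<and> chi e d y = - chi d e y \<and> chi y e d = - chi d e y" using chir_perm[OF ch, of d e y] mem dist by simp
  have i0: "chi d e u = 1 \<Longrightarrow> chi d e c = 1 \<Longrightarrow> chi d e y = 1 \<Longrightarrow> chi d u c = 1 \<Longrightarrow> chi d c y = 1 \<Longrightarrow> chi d u y = 1" using chir_A5[OF ch, of u c y e d] mem dist by auto
  show ?thesis using v0 p0 v1 p1 v2 p2 v3 p3 v4 p4 v5 p5 v6 p6 v7 p7 v8 p8 v9 p9 i0 hyp by smt
qed

lemma cfgC6:
  assumes ch: "chirotope chi E" and mem: "u \<in> E" "c \<in> E" "d \<in> E" "e \<in> E" "q \<in> E" "y \<in> E" and dist: "distinct [u,c,d,e,q,y]"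
    and hyp: "chi u c d = 1" "chi u c e = 1" "chi u c q = 1" "chi u c y = 1" "chi u d e = 1" "chi u d q = 1" "chi u d y = 1" "chi u e q = 1" "chi u e y = 1" "chi u q y = 1" "chi c d e = 1" "chi c d y = 1" "chi e y q = 1" "chi e y c = 1" "chi e y d = 1"
  shows "chi c d q = 1"
proof -
  have v0: "chi u c d = 1 \<or> chi u c d = -1" using chir_val[OF ch, of u c d] mem dist by simp
  have p0: "chi c d u = chi u c d \<and> chi d u c = chi u c d \<and> chi u d c = - chi u c d \<and> chi c u d = - chi u c d \<and> chi d c u = - chi u c d" using chir_perm[OF ch, of u c d] mem dist by simp
  have v1: "chi u c e = 1 \<or> chi u c e = -1" using chir_val[OF ch, of u c e] mem dist by simp
  have p1: "chi c e u = chi u c e \<and> chi e u c = chi u c e \<and> chi u e c = - chi u c e \<and> chi c u e = - chi u c e \<and> chi e c u = - chi u c e" using chir_perm[OF ch, of u c e] mem dist by simp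
  have v2: "chi u c q = 1 \<or> chi u c q = -1" using chir_val[OF ch, of u c q] mem dist by simp
  have p2: "chi c q u = chi u c q \<and> chi q u c = chi u c q \<and> chi u q c = - chi u c q \<and> chi c u q = - chi u c q \<and> chi q c u = - chi u c q" using chir_perm[OF ch, of u c q] mem dist by simp
  have v3: "chi u c y = 1 \<or> chi u c y = -1" using chir_val[OF ch, of u c y] mem dist by simp
  have p3: "chi c y u = chi u c y \<and> chi y u c = chi u c y \<and> chi u y c = - chi u c y \<and> chi c u y = - chi u c y \<and> chi y c u = - chi u c y" using chir_perm[OF ch, of u c y] mem dist by simp
  have v4: "chi u d e = 1 \<or> chi u d e = -1" using chir_val[OF ch, of u d e] mem dist by simp
  have p4: "chi d e u = chi u d e \<and> chi e u d = chi u d e \<and> chi u e d = - chi u d e \<and> chi d u e = - chi u d e \<and> chi e d u = - chi u d e" using chir_perm[OF ch, of u d e] mem dist by simp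
  have v5: "chi u d q = 1 \<or> chi u d q = -1" using chir_val[OF ch, of u d q] mem dist by simp
  have p5: "chi d q u = chi u d q \<and> chi q u d = chi u d q \<and> chi u q d = - chi u d q \<and> chi d u q = - chi u d q \<and> chi q d u = - chi u d q" using chir_perm[OF ch, of u d q] mem dist by simp
  have v6: "chi u d y = 1 \<or> chi u d y = -1" using chir_val[OF ch, of u d y] mem dist by simp
  have p6: "chi d y u = chi u d y \<and> chi y u d = chi u d y \<and> chi u y d = - chi u d y \<and> chi d u y = - chi u d y \<and> chi y d u = - chi u d y" using chir_perm[OF ch, of u d y] mem dist by simp
  have v7: "chi u e q = 1 \<or> chi u e q = -1" using chir_val[OF ch, of u e q] mem dist by simp
  have p7: "chi e q u = chi u e q \<and> chi q u e = chi u e q \<and> chi u q e = - chi u e q \<and> chi e u q = - chi u e q \<and> chi q e u = - chi u e q" using chir_perm[OF ch, of u e q] mem dist by simp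
  have v8: "chi u e y = 1 \<or> chi u e y = -1" using chir_val[OF ch, of u e y] mem dist by simp
  have p8: "chi e y u = chi u e y \<and> chi y u e = chi u e y \<and> chi u y e = - chi u e y \<and> chi e u y = - chi u e y \<and> chi y e u = - chi u e y" using chir_perm[OF ch, of u e y] mem dist by simp
  have v9: "chi u q y = 1 \<or> chi u q y = -1" using chir_val[OF ch, of u q y] mem dist by simp
  have p9: "chi q y u = chi u q y \<and> chi y u q = chi u q y \<and> chi u y q = - chi u q y \<and> chi q u y = - chi u q y \<and> chi y q u = - chi u q y" using chir_perm[OF ch, of u q y] mem dist by simp
  have v10: "chi c d e = 1 \<or> chi c d e = -1" using chir_val[OF ch, of c d e] mem dist by simp
  have p10: "chi d e c = chi c d e \<and> chi e c d = chi c d e \<and> chi c e d = - chi c d e \<and> chi d c e = - chi c d e \<and> chi e d c = - chi c d e" using chir_perm[OF ch, of c d e] mem dist by simp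
  have v11: "chi c d q = 1 \<or> chi c d q = -1" using chir_val[OF ch, of c d q] mem dist by simp
  have p11: "chi d q c = chi c d q \<and> chi q c d = chi c d q \<and> chi c q d = - chi c d q \<and> chi d c q = - chi c d q \<and> chi q d c = - chi c d q" using chir_perm[OF ch, of c d q] mem dist by simp
  have v12: "chi c d y = 1 \<or> chi c d y = -1" using chir_val[OF ch, of c d y] mem dist by simp
  have p12: "chi d y c = chi c d y \<and> chi y c d = chi c d y \<and> chi c y d = - chi c d y \<and> chi d c y = - chi c d y \<and> chi y d c = - chi c d y" using chir_perm[OF ch, of c d y] mem dist by simp
  have v13: "chi c e q = 1 \<or> chi c e q = -1" using chir_val[OF ch, of c e q] mem dist by simp
  have p13: "chi e q c = chi c e q \<and> chi q c e = chi c e q \<and> chi c q e = - chi c e q \<and> chi e c q = - chi c e q \<and> chi q e c = - chi c e q" using chir_perm[OF ch, of c e q] mem dist by simp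
  have v14: "chi c e y = 1 \<or> chi c e y = -1" using chir_val[OF ch, of c e y] mem dist by simp
  have p14: "chi e y c = chi c e y \<and> chi y c e = chi c e y \<and> chi c y e = - chi c e y \<and> chi e c y = - chi c e y \<and> chi y e c = - chi c e y" using chir_perm[OF ch, of c e y] mem dist by simp
  have v15: "chi c q y = 1 \<or> chi c q y = -1" using chir_val[OF ch, of c q y] mem dist by simp
  have p15: "chi q y c = chi c q y \<and> chi y c q = chi c q y \<and> chi c y q = - chi c q y \<and> chi q c y = - chi c q y \<and> chi y q c = - chi c q y" using chir_perm[OF ch, of c q y] mem dist by simp
  have v16: "chi d e q = 1 \<or> chi d e q = -1" using chir_val[OF ch, of d e q] mem dist by simp
  have p16: "chi e q d = chi d e q \<and> chi q d e = chi d e q \<and> chi d q e = - chi d e q \<and> chi e d q = - chi d e q \<and> chi q e d = - chi d e q" using chir_perm[OF ch, of d e q] mem dist by simp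
  have v17: "chi d e y = 1 \<or> chi d e y = -1" using chir_val[OF ch, of d e y] mem dist by simp
  have p17: "chi e y d = chi d e y \<and> chi y d e = chi d e y \<and> chi d y e = - chi d e y \<and> chi e d y = - chi d e y \<and> chi y e d = - chi d e y" using chir_perm[OF ch, of d e y] mem dist by simp
  have v18: "chi d q y = 1 \<or> chi d q y = -1" using chir_val[OF ch, of d q y] mem dist by simp
  have p18: "chi q y d = chi d q y \<and> chi y d q = chi d q y \<and> chi d y q = - chi d q y \<and> chi q d y = - chi d q y \<and> chi y q d = - chi d q y" using chir_perm[OF ch, of d q y] mem dist by simp
  have v19: "chi e q y = 1 \<or> chi e q y = -1" using chir_val[OF ch, of e q y] mem dist by simp
  have p19: "chi q y e = chi e q y \<and> chi y e q = chi e q y \<and> chi e y q = - chi e q y \<and> chi q e y = - chi e q y \<and> chi y q e = - chi e q y" using chir_perm[OF ch, of e q y] mem dist by simp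
  have i0: "chi d e u = 1 \<Longrightarrow> chi d e c = 1 \<Longrightarrow> chi d e q = 1 \<Longrightarrow> chi d u c = 1 \<Longrightarrow> chi d c q = 1 \<Longrightarrow> chi d u q = 1" using chir_A5[OF ch, of u c q e d] mem dist by auto
  have i1: "chi e y u = 1 \<Longrightarrow> chi e y d = 1 \<Longrightarrow> chi e y q = 1 \<Longrightarrow> chi e u d = 1 \<Longrightarrow> chi e d q = 1 \<Longrightarrow> chi e u q = 1" using chir_A5[OF ch, of u d q y e] mem dist by auto
  show ?thesis using v0 p0 v1 p1 v2 p2 v3 p3 v4 p4 v5 p5 v6 p6 v7 p7 v8 p8 v9 p9 v10 p10 v11 p11 v12 p12 v13 p13 v14 p14 v15 p15 v16 p16 v17 p17 v18 p18 v19 p19 i0 i1 hyp by smt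
qed



lemma finite_max:
  assumes "finite A" "A \<noteq> {}"
    and tr: "\<And>p q r. p \<in> A \<Longrightarrow> q \<in> A \<Longrightarrow> r \<in> A \<Longrightarrow> R p q \<Longrightarrow> R q r \<Longrightarrow> R p r"
    and tot: "\<And>p q. p \<in> A \<Longrightarrow> q \<in> A \<Longrightarrow> p \<noteq> q \<Longrightarrow> R p q \<or> R q p"
  shows "\<exists>m\<in>A. \<forall>q\<in>A-{m}. R q m"
  using assms(1,2,3,4)
proof (induction A rule: finite_ne_induct)
  case (singleton x)
  then show ?case by auto
next
  case (insert x F)
  then obtain m where m: "m \<in> F" "\<forall>q\<in>F-{m}. R q m" by blast
  show ?case
  proof (cases "R m x")
    case True
    have "\<forall>q\<in>insert x F - {x}. R q x"
    proof
      fix q assume q: "q \<in> insert x F - {x}"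
      show "R q x"
      proof (cases "q = m")
        case True then show ?thesis using \<open>R m x\<close> by simp
      next
        case False then have "R q m" using m q by auto
        then show ?thesis using insert.prems(1)[of q m x] \<open>R m x\<close> q m by auto
      qed
    qed
    then show ?thesis by blast
  next
    case False
    then have "R x m" using insert.prems(2)[of x m] m insert.hyps by auto
    then have "\<forall>q\<in>insert x F - {m}. R q m" using m by auto
    then show ?thesis using m by blast
  qed
qed

definition cp :: "('a \<Rightarrow> 'a \<Rightarrow> 'a \<Rightarrow> int) \<Rightarrow> 'a \<Rightarrow> 'a \<Rightarrow> 'a \<Rightarrow> 'a \<Rightarrow> bool" where
  "cp chi u x a b \<longleftrightarrow> distinct [x,a,b] \<and> chi u x a = - chi u x b \<and> chi a b x = chi a b u"

definition hull :: "('a \<Rightarrow> 'a \<Rightarrow> 'a \<Rightarrow> int) \<Rightarrow> 'a \<Rightarrow> 'a set \<Rightarrow> 'a \<Rightarrow> 'a \<Rightarrow> bool" where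
  "hull chi u S c d \<longleftrightarrow> c \<noteq> d \<and> (\<forall>q\<in>S-{c,d}. chi c d q = chi c d u)"

locale core =
  fixes chi :: "'a \<Rightarrow> 'a \<Rightarrow> 'a \<Rightarrow> int" and X :: "'a set" and u y0 :: 'a
  assumes ch: "chirotope chi (insert u X)" and uX: "u \<notin> X" and y0: "y0 \<in> X"
    and ext1: "\<forall>z\<in>X-{y0}. chi u y0 z = 1"
begin

definition lt where "lt p q \<longleftrightarrow> p \<in> X \<and> q \<in> X \<and> p \<noteq> q \<and> chi u p q = 1"

lemma finX: "finite X" using ch unfolding chirotope_def by auto

lemma pm: "a \<in> insert u X \<Longrightarrow> b \<in> insert u X \<Longrightarrow> c \<in> insert u X \<Longrightarrow> a \<noteq> b \<Longrightarrow> a \<noteq> c \<Longrightarrow> b \<noteq> c \<Longrightarrow>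
   chi b c a = chi a b c \<and> chi c a b = chi a b c \<and> chi a c b = - chi a b c
     \<and> chi b a c = - chi a b c \<and> chi c b a = - chi a b c"
  using chir_perm[OF ch] by blast

lemma vl: "a \<in> insert u X \<Longrightarrow> b \<in> insert u X \<Longrightarrow> c \<in> insert u X \<Longrightarrow> a \<noteq> b \<Longrightarrow> a \<noteq> c \<Longrightarrow> b \<noteq> c \<Longrightarrow>
   chi a b c = 1 \<or> chi a b c = -1"
  using chir_val[OF ch] by auto

lemma uneq: "p \<in> X \<Longrightarrow> u \<noteq> p" using uX by auto

lemma lt_asym: assumes "lt p q" shows "\<not> lt q p"
proof -
  have "u \<noteq> p" "u \<noteq> q" using assms uX unfolding lt_def by auto
  then show ?thesis using assms pm[of u p q] unfolding lt_def by auto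
qed

lemma lt_total: assumes "p \<in> X" "q \<in> X" "p \<noteq> q" shows "lt p q \<or> lt q p"
proof -
  have "u \<noteq> p" "u \<noteq> q" using assms uX by auto
  then show ?thesis unfolding lt_def using assms pm[of u p q] vl[of u p q] by auto
qed

lemma lt_trans: assumes "lt p q" "lt q r" shows "lt p r"
proof -
  have m: "p \<in> X" "q \<in> X" "r \<in> X" "p \<noteq> q" "q \<noteq> r" and h: "chi u p q = 1" "chi u q r = 1"
    using assms unfolding lt_def by auto
  have pr: "p \<noteq> r" using assms lt_asym by auto
  have "chi u p r = 1"
  proof (cases "y0 \<in> {p,q,r}")
    case True
    then consider "y0 = p" | "y0 = q" | "y0 = r" by auto
    then show ?thesis
    proof cases
      case 1 then show ?thesis using ext1 m pr by auto
    next
      case 2 then show ?thesis using ext1 m h pm[of u p q] uX by auto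
    next
      case 3 then show ?thesis using ext1 m h pm[of u q r] uX by auto
    qed
  next
    case False
    then show ?thesis using chir_A5[OF ch, of p q r y0 u] m pr uX y0 ext1 h by auto
  qed
  then show ?thesis using m pr unfolding lt_def by auto
qed

lemma ltD: "lt p q \<Longrightarrow> p \<in> X \<and> q \<in> X \<and> p \<noteq> q \<and> chi u p q = 1 \<and> u \<noteq> p \<and> u \<noteq> q"
  unfolding lt_def using uX by auto

lemma ltE: "lt p q \<Longrightarrow> p \<in> X \<and> q \<in> X \<and> p \<noteq> q \<and> chi u p q = 1 \<and> u \<noteq> p \<and> u \<noteq> q"
  unfolding lt_def using uX by auto

lemma core_ord:
  "finite S \<Longrightarrow> S \<subseteq> X \<Longrightarrow> x \<in> S \<Longrightarrow> a \<in> S \<Longrightarrow> b \<in> S \<Longrightarrow> lt a x \<Longrightarrow> lt x b \<Longrightarrow> chi a b x = 1 \<Longrightarrow>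
   \<exists>c\<in>S. \<exists>d\<in>S. lt c x \<and> lt x d \<and> chi c d x = 1 \<and> (\<forall>q\<in>S-{c,d}. chi c d q = 1)"
proof (induction "card S" arbitrary: S a b rule: less_induct)
  case less
  note fS = less.prems(1) and SX = less.prems(2) and xS = less.prems(3) and aS = less.prems(4)
    and bS = less.prems(5) and ax = less.prems(6) and xb = less.prems(7) and abx = less.prems(8)
  have "\<exists>m\<in>S. \<forall>q\<in>S-{m}. lt q m"
  proof (rule finite_max)
    show "finite S" "S \<noteq> {}" using fS xS by auto
  next
    fix p q r assume "lt p q" "lt q r" then show "lt p r" using lt_trans by blast
  next
    fix p q assume "p \<in> S" "q \<in> S" "p \<noteq> q" then show "lt p q \<or> lt q p" using lt_total SX by blast
  qed
  then obtain y where yS: "y \<in> S" and ymax: "\<forall>q\<in>S-{y}. lt q y" by blast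
  have xy: "x \<noteq> y"
  proof
    assume "x = y"
    then have "lt b x" using ymax bS xb ltD by auto
    then show False using xb lt_asym by auto
  qed
  have lxy: "lt x y" using ymax xS xy by auto
  have lay: "lt a y" using lxy ax lt_trans by blast
  have lby: "b \<noteq> y \<Longrightarrow> lt b y" using ymax bS by auto
  have ab: "lt a b" using ax xb lt_trans by blast
  have yX: "y \<in> X" using yS SX by auto
  have "\<exists>m\<in>S-{y}. \<forall>q\<in>S-{y}-{m}. chi y q m = 1"
  proof (rule finite_max)
    show "finite (S - {y})" using fS by auto
    show "S - {y} \<noteq> {}" using xS xy by auto
  next
    fix p q r assume m: "p \<in> S - {y}" "q \<in> S - {y}" "r \<in> S - {y}" and h: "chi y p q = 1" "chi y q r = 1"
    have l: "lt p y" "lt q y" "lt r y" using m ymax by auto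
    show "chi y p r = 1"
    proof (cases "p = q \<or> q = r")
      case True then show ?thesis using h by auto
    next
      case False
      show ?thesis
      proof (cases "p = r")
        case True
        then have False using h pm[of y p q] l ltD False by auto
        then show ?thesis by blast
      next
        case pr: False
        have "chi y u p = 1" "chi y u q = 1" "chi y u r = 1"
          using l ltD pm[of u p y] pm[of u q y] pm[of u r y] by auto
        then show ?thesis using chir_A5[OF ch, of p q r u y] h l ltD False pr by auto
      qed
    qed
  next
    fix p q assume m: "p \<in> S - {y}" "q \<in> S - {y}" "p \<noteq> q"
    show "chi y p q = 1 \<or> chi y q p = 1"
    proof -
      have "p \<in> X" "q \<in> X" "p \<noteq> y" "q \<noteq> y" using m SX by auto
      then show ?thesis using vl[of y p q] pm[of y p q] yX m(3) by auto
    qed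
  qed
  then obtain m where mS: "m \<in> S" "m \<noteq> y" and mlow0: "\<forall>q\<in>S-{y}-{m}. chi y q m = 1" by blast
  have lmy: "lt m y" using mS ymax by auto
  have mlow: "\<And>q. q \<in> S \<Longrightarrow> q \<noteq> y \<Longrightarrow> q \<noteq> m \<Longrightarrow> chi m y q = 1"
  proof -
    fix q assume q: "q \<in> S" "q \<noteq> y" "q \<noteq> m"
    have "chi y q m = 1" using mlow0 q by auto
    moreover have "lt q y" using ymax q by auto
    ultimately show "chi m y q = 1" using pm[of m y q] lmy ltD q by auto
  qed
  have mX: "m \<in> X" using mS SX by auto
  consider "lt m x" | "m = x" | "lt x m" using lt_total[of m x] mX xS SX by auto
  then show ?case
  proof cases
    case 1
    have "\<forall>q\<in>S-{m,y}. chi m y q = 1" using mlow by auto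
    moreover have "chi m y x = 1" using mlow xS xy 1 ltD by auto
    ultimately show ?thesis using 1 lxy mS yS by blast
  next
    case 2
    have may: "chi m y a = 1" using mlow aS ax lay ltD 2 by auto
    show ?thesis
    proof (cases "b = y")
      case True
      then show ?thesis using may abx 2 pm[of a x y] ax lxy lay ltD by auto
    next
      case False
      have "chi m y b = 1" using mlow bS xb False ltD 2 by auto
      then have h1: "chi x y b = 1" using 2 by simp
      have h2: "chi x y a = 1" using may 2 by simp
      have False
        by (rule cfgC0[OF ch, of u a x b y])
          (simp_all add: h1 h2 abx ltE[OF ax] ltE[OF xb] ltE[OF lby[OF False]] ltE[OF lay] ltE[OF lxy] ltE[OF ab])
      then show ?thesis by blast
    qed
  next
    case 3
    define S' where "S' = {q\<in>S. q = m \<or> lt q m}"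
    have S'S: "S' \<subseteq> S" unfolding S'_def by auto
    have yS': "y \<notin> S'" unfolding S'_def using lmy lt_asym mS by auto
    have cardS': "card S' < card S"
      using psubset_card_mono[OF fS, of S'] S'S yS' yS by auto
    have xS': "x \<in> S'" using 3 xS unfolding S'_def by auto
    have am: "lt a m" using ax 3 lt_trans by blast
    have aS': "a \<in> S'" using am aS unfolding S'_def by auto
    have may: "chi m y a = 1" using mlow aS am lay ltD by auto
    have mxy: "chi m y x = 1" using mlow xS xy 3 ltD by auto
    obtain b' where b'S': "b' \<in> S'" and xb': "lt x b'" and ab'x: "chi a b' x = 1"
    proof (cases "b = m \<or> lt b m")
      case True
      then show ?thesis using that[of b] bS xb abx unfolding S'_def by auto
    next
      case False
      then have mb: "lt m b" using lt_total[of b m] bS SX mX by auto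
      have "chi a m x = 1"
      proof (cases "b = y")
        case True
        have h: "chi a y x = 1" using abx True by simp
        show ?thesis
          by (rule cfgC2[OF ch, of u a x m y])
            (simp_all add: h may mxy ltE[OF ax] ltE[OF 3] ltE[OF lmy] ltE[OF am] ltE[OF lay] ltE[OF lxy])
      next
        case False
        have "chi m y b = 1" using mlow bS False mb ltD by auto
        then show ?thesis
          by (intro cfgC3[OF ch, of u a x m b y])
            (simp_all add: abx may mxy ltE[OF ax] ltE[OF 3] ltE[OF lmy] ltE[OF am] ltE[OF lay] ltE[OF lxy]
               ltE[OF lby[OF False]] ltE[OF mb] ltE[OF ab] ltE[OF xb] ltE[OF lt_trans[OF 3 mb]])
      qed
      then show ?thesis using that[of m] 3 mS unfolding S'_def by auto
    qed
    have "\<exists>c\<in>S'. \<exists>d\<in>S'. lt c x \<and> lt x d \<and> chi c d x = 1 \<and> (\<forall>q\<in>S'-{c,d}. chi c d q = 1)"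
      using less.hyps[OF cardS', of a b'] fS S'S SX xS' aS' b'S' ax xb' ab'x
    proof -
      have "finite S'" "S' \<subseteq> X" using fS S'S SX finite_subset by auto
      then show ?thesis using less.hyps[OF cardS', of a b'] xS' aS' b'S' ax xb' ab'x by blast
    qed
    then obtain c d where cS': "c \<in> S'" and dS': "d \<in> S'" and cx: "lt c x" and xd: "lt x d"
      and cdx: "chi c d x = 1" and cdq: "\<forall>q\<in>S'-{c,d}. chi c d q = 1" by blast
    have cm: "lt c m" using cx 3 lt_trans by blast
    have cd: "lt c d" using cx xd lt_trans by blast
    have cy: "lt c y" using cm lmy lt_trans by blast
    have mcy: "chi m y c = 1" using mlow cS' S'S yS' cm ltD by auto
    have "\<forall>q\<in>S-{c,d}. chi c d q = 1"
    proof
      fix q assume qS: "q \<in> S - {c,d}"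
      show "chi c d q = 1"
      proof (cases "q \<in> S'")
        case True then show ?thesis using cdq qS by auto
      next
        case False
        then have qm: "q \<noteq> m" "\<not> lt q m" using qS unfolding S'_def by auto
        then have mq: "lt m q" using lt_total[of q m] qS SX mX by auto
        have "d = m \<or> lt d m" using dS' unfolding S'_def by auto
        then show ?thesis
        proof
          assume dm: "d = m"
          show ?thesis
          proof (cases "q = y")
            case True
            then show ?thesis using dm mcy pm[of c m y] cm lmy cy ltD by auto
          next
            case False
            have qy: "lt q y" using ymax qS False by auto
            have myq: "chi m y q = 1" using mlow qS False qm by auto
            show ?thesis unfolding dm
              by (intro cfgC4[OF ch, of u c m q y])
                (simp_all add: ltE[OF qy] myq mcy ltE[OF cm] ltE[OF mq] ltE[OF lmy] ltE[OF cy] ltE[OF lt_trans[OF cm mq]])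
          qed
        next
          assume dm: "lt d m"
          have cdm: "chi c d m = 1" using cdq 3 mS dm cm ltD unfolding S'_def by auto
          have dy: "lt d y" using dm lmy lt_trans by blast
          have mdy: "chi m y d = 1" using mlow dS' S'S yS' dm ltD by auto
          have cdy: "chi c d y = 1"
            by (rule cfgC5[OF ch, of u c d m y])
              (simp_all add: cdm mcy mdy ltE[OF cd] ltE[OF cm] ltE[OF cy] ltE[OF dm] ltE[OF dy] ltE[OF lmy])
          show ?thesis
          proof (cases "q = y")
            case True then show ?thesis using cdy by simp
          next
            case False
            have qy: "lt q y" using ymax qS False by auto
            have myq: "chi m y q = 1" using mlow qS False qm by auto
            show ?thesis
              by (intro cfgC6[OF ch, of u c d m q y])
                (simp_all add: ltE[OF qy] myq cdm cdy mcy mdy ltE[OF cd] ltE[OF cm] ltE[OF cy] ltE[OF dm] ltE[OF dy] ltE[OF lmy]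
                  ltE[OF mq] ltE[OF lt_trans[OF cm mq]] ltE[OF lt_trans[OF dm mq]])
          qed
        qed
      qed
    qed
    then show ?thesis using cS' dS' S'S cx xd cdx by blast
  qed
qed

lemma G_aux:
  assumes xX: "x \<in> X" and aX: "a \<in> X" and bX: "b \<in> X" and c: "cp chi u x a b" and xb1: "chi u x b = 1"
  shows "\<exists>c\<in>X. \<exists>d\<in>X. cp chi u x c d \<and> hull chi u X c d"
proof -
  have d: "x \<noteq> a" "x \<noteq> b" "a \<noteq> b" and e1: "chi u x a = - chi u x b" and e2: "chi a b x = chi a b u"
    using c unfolding cp_def by auto
  have un: "u \<noteq> x" "u \<noteq> a" "u \<noteq> b" using xX aX bX uX by auto
  have xb: "lt x b" using xb1 d xX bX unfolding lt_def by auto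
  have "chi u a x = 1" using e1 xb1 pm[of u x a] un d xX aX by auto
  then have ax: "lt a x" using d xX aX unfolding lt_def by auto
  have ab: "lt a b" using ax xb lt_trans by blast
  have "chi a b x = 1" using e2 pm[of u a b] ltE[OF ab] aX bX by auto
  then obtain c d where cX: "c \<in> X" and dX: "d \<in> X" and cx: "lt c x" and xd: "lt x d" and cdx: "chi c d x = 1"
    and cdq: "\<forall>q\<in>X-{c,d}. chi c d q = 1"
    using core_ord[OF finX _ xX aX bX ax xb] by blast
  have cd: "lt c d" using cx xd lt_trans by blast
  have cdu: "chi c d u = 1" using pm[of u c d] ltE[OF cd] by auto
  have xc: "chi u x c = -1" using pm[of u c x] ltE[OF cx] by auto
  have "cp chi u x c d" unfolding cp_def using ltE[OF cx] ltE[OF xd] ltE[OF cd] xc cdx cdu by auto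
  moreover have "hull chi u X c d" unfolding hull_def using cdq cdu ltE[OF cd] by auto
  ultimately show ?thesis using cX dX by blast
qed

lemma G_core:
  assumes xX: "x \<in> X" and aX: "a \<in> X" and bX: "b \<in> X" and c: "cp chi u x a b"
  shows "\<exists>c\<in>X. \<exists>d\<in>X. cp chi u x c d \<and> hull chi u X c d"
proof -
  have d: "x \<noteq> a" "x \<noteq> b" "a \<noteq> b" and e1: "chi u x a = - chi u x b" and e2: "chi a b x = chi a b u"
    using c unfolding cp_def by auto
  have un: "u \<noteq> x" "u \<noteq> a" "u \<noteq> b" using xX aX bX uX by auto
  show ?thesis
  proof (cases "chi u x b = 1")
    case True then show ?thesis using G_aux[OF xX aX bX c] by blast
  next
    case False
    then have "chi u x b = -1" using vl[of u x b] un d xX bX by auto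
    then have xa: "chi u x a = 1" using e1 by simp
    have "cp chi u x b a" unfolding cp_def using d e1 e2 pm[of a b x] pm[of a b u] un d xX aX bX by auto
    then show ?thesis using G_aux[OF xX bX aX _ xa] by blast
  qed
qed

end

lemma cp_neg: "cp (\<lambda>a b c. - chi a b c) u x a b = cp chi u x a b"
  unfolding cp_def by auto

lemma hull_neg: "hull (\<lambda>a b c. - chi a b c) u S c d = hull chi u S c d"
  unfolding hull_def by auto

lemma G_rooted:
  assumes rc: "rooted_chirotope chi X u" and xX: "x \<in> X" and aX: "a \<in> X" and bX: "b \<in> X"
    and c: "cp chi u x a b"
  shows "\<exists>c\<in>X. \<exists>d\<in>X. cp chi u x c d \<and> hull chi u X c d"
proof -
  have uX: "u \<notin> X" and ch: "chirotope chi (insert u X)" using rc unfolding rooted_chirotope_def by auto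
  obtain y0 s where y0: "y0 \<in> X" and ext: "\<forall>z\<in>X-{y0}. chi u y0 z = s"
    using rc unfolding rooted_chirotope_def by auto
  have d: "x \<noteq> a" "x \<noteq> b" "a \<noteq> b" using c unfolding cp_def by auto
  obtain z where z: "z \<in> X" "z \<noteq> y0" using d xX aX bX by metis
  have "chi u y0 z = 1 \<or> chi u y0 z = -1" using chir_val[OF ch, of u y0 z] z y0 uX by auto
  then have "s = 1 \<or> s = -1" using ext z by auto
  then show ?thesis
  proof
    assume "s = 1"
    then interpret core chi X u y0 using ch uX y0 ext by unfold_locales auto
    show ?thesis using G_core[OF xX aX bX c] .
  next
    assume "s = -1"
    then interpret core "\<lambda>a b c. - chi a b c" X u y0 using chir_neg[OF ch] uX y0 ext by unfold_locales auto
    show ?thesis using G_core[OF xX aX bX] c cp_neg hull_neg by metis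
  qed
qed


lemma crossing_disj: "crossing f s1 s2 \<Longrightarrow> s1 \<inter> s2 = {}"
  unfolding crossing_def by auto

lemma crossing_sym: "crossing f s1 s2 = crossing f s2 s1"
  unfolding crossing_def by auto

lemma wcrossing_sym: "wcrossing chi u v s1 s2 = wcrossing chi u v s2 s1"
  unfolding wcrossing_def using crossing_sym by metis

lemma crossing_cong:
  assumes "\<And>p q r. p \<in> s1 \<union> s2 \<Longrightarrow> q \<in> s1 \<union> s2 \<Longrightarrow> r \<in> s1 \<union> s2 \<Longrightarrow> f p q r = g p q r"
  shows "crossing f s1 s2 = crossing g s1 s2"
  unfolding crossing_def
proof (intro iffI; elim exE conjE)
  fix x y z t assume h: "s1 = {x, y}" "s2 = {z, t}" "distinct [x, y, z, t]"
    "f x y z = - f x y t" "f z t x = - f z t y"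
  then show "\<exists>x y z t. s1 = {x, y} \<and> s2 = {z, t} \<and> distinct [x, y, z, t] \<and>
      g x y z = - g x y t \<and> g z t x = - g z t y" using assms by (metis Un_iff insertI1 insert_commute)
next
  fix x y z t assume h: "s1 = {x, y}" "s2 = {z, t}" "distinct [x, y, z, t]"
    "g x y z = - g x y t" "g z t x = - g z t y"
  then show "\<exists>x y z t. s1 = {x, y} \<and> s2 = {z, t} \<and> distinct [x, y, z, t] \<and>
      f x y z = - f x y t \<and> f z t x = - f z t y" using assms by (metis Un_iff insertI1 insert_commute)
qed

definition CC where "CC f x y z t \<longleftrightarrow> f x y z = - f x y t \<and> f z t x = - f z t y"

lemma crossing_pair:
  "crossing f {a,b} {c,d} \<longleftrightarrow> distinct [a,b,c,d] \<and>
     (CC f a b c d \<or> CC f b a c d \<or> CC f a b d c \<or> CC f b a d c)"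
  unfolding crossing_def CC_def doubleton_eq_iff
  apply (rule iffI)
   apply (elim exE conjE disjE; simp; blast)
  apply (elim conjE disjE)
     apply (rule exI[of _ a], rule exI[of _ b], rule exI[of _ c], rule exI[of _ d], auto)
  done


locale wt =
  fixes chi :: "'a \<Rightarrow> 'a \<Rightarrow> 'a \<Rightarrow> int" and X :: "'a set" and u v :: 'a
  assumes rc: "rooted_chirotope chi X u" and vX: "v \<notin> X" and vu: "v \<noteq> u"
begin

lemma ch: "chirotope chi (insert u X)" and uX: "u \<notin> X"
  using rc unfolding rooted_chirotope_def by auto

lemma finX: "finite X" using ch unfolding chirotope_def by auto

lemma pm: "a \<in> insert u X \<Longrightarrow> b \<in> insert u X \<Longrightarrow> c \<in> insert u X \<Longrightarrow> a \<noteq> b \<Longrightarrow> a \<noteq> c \<Longrightarrow> b \<noteq> c \<Longrightarrow>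
   chi b c a = chi a b c \<and> chi c a b = chi a b c \<and> chi a c b = - chi a b c
     \<and> chi b a c = - chi a b c \<and> chi c b a = - chi a b c"
  using chir_perm[OF ch] by blast

lemma vl: "a \<in> insert u X \<Longrightarrow> b \<in> insert u X \<Longrightarrow> c \<in> insert u X \<Longrightarrow> a \<noteq> b \<Longrightarrow> a \<noteq> c \<Longrightarrow> b \<noteq> c \<Longrightarrow>
   chi a b c = 1 \<or> chi a b c = -1"
  using chir_val[OF ch] by auto

lemma K1:
  assumes xX: "x \<in> X" and aX: "a \<in> X" and bX: "b \<in> X"
  shows "wcrossing chi u v {v,x} {a,b} \<longleftrightarrow> cp chi u x a b"
proof -
  have n: "u \<noteq> x" "u \<noteq> a" "u \<noteq> b" "v \<noteq> x" "v \<noteq> a" "v \<noteq> b" using xX aX bX uX vX by auto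
  have w: "wcrossing chi u v {v,x} {a,b} \<longleftrightarrow> crossing (chi_v chi u v) {v,x} {a,b}"
    unfolding wcrossing_def using n vu by auto
  have cv: "chi_v chi u v v x a = - chi x a u" "chi_v chi u v v x b = - chi x b u"
    "chi_v chi u v x v a = - chi a x u" "chi_v chi u v x v b = - chi b x u"
    "chi_v chi u v a b v = - chi a b u" "chi_v chi u v b a v = - chi b a u"
    "chi_v chi u v a b x = chi a b x" "chi_v chi u v b a x = chi b a x"
    unfolding chi_v_def using n by auto
  show ?thesis
  proof (cases "distinct [x,a,b]")
    case False
    then have "\<not> cp chi u x a b" unfolding cp_def by auto
    moreover have "\<not> crossing (chi_v chi u v) {v,x} {a,b}" using False crossing_pair by fastforce
    ultimately show ?thesis using w by auto
  next
    case True
    have d: "x \<noteq> a" "x \<noteq> b" "a \<noteq> b" using True by auto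
    have p1: "chi a x u = - chi x a u" "chi u x a = chi x a u" using pm[of x a u] xX aX n d by auto
    have p2: "chi b x u = - chi x b u" "chi u x b = chi x b u" using pm[of x b u] xX bX n d by auto
    have p3: "chi b a u = - chi a b u" using pm[of a b u] aX bX n d by auto
    have p4: "chi b a x = - chi a b x" using pm[of a b x] aX bX n d xX by auto
    have "crossing (chi_v chi u v) {v,x} {a,b} \<longleftrightarrow> cp chi u x a b"
      unfolding crossing_pair CC_def cp_def cv using p1 p2 p3 p4 True n by auto
    then show ?thesis using w by auto
  qed
qed


definition L where "L = {x\<in>X. \<forall>a\<in>X. \<forall>b\<in>X. \<not> cp chi u x a b}"
definition Ledges where "Ledges = (\<lambda>x. {v,x}) ` L"

lemma LX: "L \<subseteq> X" unfolding L_def by auto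

lemma K2:
  assumes xL: "x \<in> L" and ws: "weak_segment X u v s"
  shows "\<not> wcrossing chi u v {v,x} s"
proof
  assume w: "wcrossing chi u v {v,x} s"
  have xX: "x \<in> X" using xL LX by auto
  obtain p q where s: "s = {p,q}" "p \<noteq> q" "p \<in> X \<union> {u,v}" "q \<in> X \<union> {u,v}"
    using ws unfolding weak_segment_def segment_def by auto
  have cr: "crossing (chi_v chi u v) {v,x} s" using w unfolding wcrossing_def by auto
  have "v \<notin> s" "x \<notin> s" using crossing_disj[OF cr] by auto
  moreover have "u \<notin> s" using w unfolding wcrossing_def by auto
  ultimately have "p \<in> X" "q \<in> X" using s by auto
  then have "cp chi u x p q" using K1[OF xX] w s by auto
  then show False using xL \<open>p \<in> X\<close> \<open>q \<in> X\<close> unfolding L_def by auto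
qed

lemma vL_weak: "x \<in> X \<Longrightarrow> weak_segment X u v {v,x}"
  unfolding weak_segment_def segment_def using vX uX vu by (auto simp: doubleton_eq_iff)

lemma K3:
  assumes D: "weak_triangulation chi X u v D" and xL: "x \<in> L"
  shows "{v,x} \<in> D"
proof (rule ccontr)
  assume "{v,x} \<notin> D"
  moreover have "weak_segment X u v {v,x}" using vL_weak xL LX by auto
  ultimately obtain s' where s': "s' \<in> D" "wcrossing chi u v {v,x} s' \<or> wcrossing chi u v s' {v,x}"
    using D unfolding weak_triangulation_def by blast
  then have "wcrossing chi u v {v,x} s'" using wcrossing_sym by metis
  moreover have "weak_segment X u v s'" using D s' unfolding weak_triangulation_def by auto
  ultimately show False using K2[OF xL] by auto
qed

lemma seg_weak: "segment (insert u X) s \<Longrightarrow> weak_segment X u v s"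
  unfolding weak_segment_def segment_def using vX vu by (auto simp: doubleton_eq_iff)

lemma seg_nov: "segment (insert u X) s \<Longrightarrow> v \<notin> s"
  unfolding segment_def using vX vu by auto

lemma Kvfree:
  assumes "v \<notin> s1" "v \<notin> s2"
  shows "wcrossing chi u v s1 s2 = crossing chi s1 s2"
proof -
  have "crossing (chi_v chi u v) s1 s2 = crossing chi s1 s2"
    by (rule crossing_cong) (use assms in \<open>auto simp: chi_v_def\<close>)
  then show ?thesis unfolding wcrossing_def using assms by auto
qed

lemma K5:
  assumes T: "triangulation chi (insert u X) T" and cX: "c \<in> X" and dX: "d \<in> X"
    and h: "hull chi u X c d"
  shows "{c,d} \<in> T"
proof (rule ccontr)
  assume nT: "{c,d} \<notin> T"
  have cd: "c \<noteq> d" and hq: "\<forall>q\<in>X-{c,d}. chi c d q = chi c d u" using h unfolding hull_def by auto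
  have "segment (insert u X) {c,d}" unfolding segment_def using cX dX cd by blast
  then obtain s' where s': "s' \<in> T" "crossing chi {c,d} s' \<or> crossing chi s' {c,d}"
    using T nT unfolding triangulation_def by blast
  then have cr: "crossing chi {c,d} s'" using crossing_sym[of chi "{c,d}" s'] by blast
  have "segment (insert u X) s'" using s'(1) T unfolding triangulation_def by blast
  then obtain z t where zt: "s' = {z,t}" "z \<in> insert u X" "t \<in> insert u X"
    unfolding segment_def by blast
  have cr2: "crossing chi {c,d} {z,t}" using cr zt by simp
  have dd: "distinct [c,d,z,t]" using cr2 unfolding crossing_pair by blast
  have hz: "chi c d z = chi c d u" using hq zt dd by auto
  have ht: "chi c d t = chi c d u" using hq zt dd by auto
  have un: "u \<noteq> c" "u \<noteq> d" using cX dX uX by auto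
  have v: "chi c d u = 1 \<or> chi c d u = -1" using vl[of c d u] cX dX un cd by auto
  have pz: "chi d c z = - chi c d z" using pm[of c d z] cX dX zt dd by auto
  have pt: "chi d c t = - chi c d t" using pm[of c d t] cX dX zt dd by auto
  have "CC chi c d z t \<or> CC chi d c z t \<or> CC chi c d t z \<or> CC chi d c t z"
    using cr2 unfolding crossing_pair by blast
  then show False unfolding CC_def using hz ht pz pt v by auto
qed

end
context wt
begin

lemma vis:
  assumes T: "triangulation chi (insert u X) T" and xX: "x \<in> X"
  shows "(\<forall>s\<in>T. \<not> wcrossing chi u v {v,x} s \<and> \<not> wcrossing chi u v s {v,x}) \<longleftrightarrow> x \<in> L"
proof
  assume xL: "x \<in> L"
  show "\<forall>s\<in>T. \<not> wcrossing chi u v {v,x} s \<and> \<not> wcrossing chi u v s {v,x}"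
  proof
    fix s assume "s \<in> T"
    then have "segment (insert u X) s" using T unfolding triangulation_def by blast
    then have "weak_segment X u v s" by (rule seg_weak)
    then have "\<not> wcrossing chi u v {v,x} s" using K2[OF xL] by blast
    then show "\<not> wcrossing chi u v {v,x} s \<and> \<not> wcrossing chi u v s {v,x}"
      using wcrossing_sym[of chi u v s "{v,x}"] by blast
  qed
next
  assume nc: "\<forall>s\<in>T. \<not> wcrossing chi u v {v,x} s \<and> \<not> wcrossing chi u v s {v,x}"
  show "x \<in> L"
  proof (rule ccontr)
    assume "x \<notin> L"
    then obtain a b where "a \<in> X" "b \<in> X" "cp chi u x a b" using xX unfolding L_def by blast
    then obtain c d where cd: "c \<in> X" "d \<in> X" "cp chi u x c d" "hull chi u X c d"
      using G_rooted[OF rc xX] by blast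
    then have "{c,d} \<in> T" using K5[OF T] by blast
    moreover have "wcrossing chi u v {v,x} {c,d}" using K1[OF xX cd(1) cd(2)] cd(3) by blast
    ultimately show False using nc by blast
  qed
qed

lemma K4:
  assumes T: "triangulation chi (insert u X) T"
  shows "extension chi X u v T = T \<union> Ledges"
proof -
  have "{{v, x} | x. x \<in> X \<and> (\<forall>s\<in>T. \<not> wcrossing chi u v {v, x} s \<and> \<not> wcrossing chi u v s {v, x})}
        = Ledges"
  proof (rule set_eqI)
    fix s
    show "s \<in> {{v, x} | x. x \<in> X \<and> (\<forall>s\<in>T. \<not> wcrossing chi u v {v, x} s \<and> \<not> wcrossing chi u v s {v, x})}
        \<longleftrightarrow> s \<in> Ledges"
    proof
      assume "s \<in> {{v, x} | x. x \<in> X \<and> (\<forall>s\<in>T. \<not> wcrossing chi u v {v, x} s \<and> \<not> wcrossing chi u v s {v, x})}"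
      then obtain x where "s = {v,x}" "x \<in> X" "\<forall>s\<in>T. \<not> wcrossing chi u v {v, x} s \<and> \<not> wcrossing chi u v s {v, x}"
        by blast
      then show "s \<in> Ledges" using vis[OF T] unfolding Ledges_def by blast
    next
      assume "s \<in> Ledges"
      then obtain x where x: "s = {v,x}" "x \<in> L" unfolding Ledges_def by blast
      then have "x \<in> X" using LX by blast
      then show "s \<in> {{v, x} | x. x \<in> X \<and> (\<forall>s\<in>T. \<not> wcrossing chi u v {v, x} s \<and> \<not> wcrossing chi u v s {v, x})}"
        using vis[OF T] x by blast
    qed
  qed
  then show ?thesis unfolding extension_def by simp
qed

lemma K7: "\<exists>T. triangulation chi (insert u X) T"
proof -
  define A where "A = {s. segment (insert u X) s}"
  define F where "F = {T. T \<subseteq> A \<and> (\<forall>s1\<in>T. \<forall>s2\<in>T. \<not> crossing chi s1 s2)}"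
  have "A \<subseteq> Pow (insert u X)" unfolding A_def segment_def by blast
  then have fs: "finite A" using finX finite_subset by blast
  have "F \<subseteq> Pow A" unfolding F_def by blast
  then have "finite F" using fs finite_subset by blast
  moreover have "{} \<in> F" unfolding F_def by blast
  ultimately obtain T where TF: "T \<in> F" and mx: "\<And>T'. T' \<in> F \<Longrightarrow> T \<subseteq> T' \<Longrightarrow> T = T'"
    using finite_has_maximal[of F] by blast
  have "triangulation chi (insert u X) T"
    unfolding triangulation_def
  proof (intro conjI allI impI)
    show "\<forall>s\<in>T. segment (insert u X) s" using TF unfolding F_def A_def by blast
    show "\<forall>s1\<in>T. \<forall>s2\<in>T. \<not> crossing chi s1 s2" using TF unfolding F_def by blast
  next
    fix s assume s: "segment (insert u X) s \<and> s \<notin> T"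
    show "\<exists>s'\<in>T. crossing chi s s' \<or> crossing chi s' s"
    proof (rule ccontr)
      assume nc: "\<not> (\<exists>s'\<in>T. crossing chi s s' \<or> crossing chi s' s)"
      have "s \<noteq> {}" using s unfolding segment_def by blast
      then have "\<not> crossing chi s s" using crossing_disj by blast
      then have "insert s T \<in> F" using TF nc s unfolding F_def A_def by blast
      then have "T = insert s T" using mx by blast
      then show False using s by blast
    qed
  qed
  then show ?thesis by blast
qed

lemma T_nov: "triangulation chi (insert u X) T \<Longrightarrow> s \<in> T \<Longrightarrow> v \<notin> s"
  using seg_nov unfolding triangulation_def by blast

lemma T_weak: "triangulation chi (insert u X) T \<Longrightarrow> s \<in> T \<Longrightarrow> weak_segment X u v s"
  using seg_weak unfolding triangulation_def by blast

lemma K8: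
  assumes T: "triangulation chi (insert u X) T"
  shows "weak_triangulation chi X u v (T \<union> Ledges)"
  unfolding weak_triangulation_def
proof (intro conjI allI impI ballI)
  fix s assume s: "s \<in> T \<union> Ledges"
  show "weak_segment X u v s"
  proof (cases "s \<in> T")
    case True then show ?thesis using T_weak[OF T] by blast
  next
    case False
    then obtain x where "s = {v,x}" "x \<in> L" using s unfolding Ledges_def by blast
    then show ?thesis using vL_weak LX by blast
  qed
next
  fix s1 s2 assume s1: "s1 \<in> T \<union> Ledges" and s2: "s2 \<in> T \<union> Ledges"
  show "\<not> wcrossing chi u v s1 s2"
  proof (cases "s1 \<in> T")
    case True
    have v1: "v \<notin> s1" "weak_segment X u v s1" using T_nov[OF T True] T_weak[OF T True] by auto
    show ?thesis
    proof (cases "s2 \<in> T")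
      case True
      have "v \<notin> s2" using T_nov[OF T True] .
      then have "wcrossing chi u v s1 s2 = crossing chi s1 s2" using Kvfree v1 by blast
      moreover have "\<not> crossing chi s1 s2" using T True \<open>s1 \<in> T\<close> unfolding triangulation_def by blast
      ultimately show ?thesis by blast
    next
      case False
      then obtain x where x2: "x \<in> L" "s2 = {v,x}" using s2 unfolding Ledges_def by blast
      have "\<not> wcrossing chi u v {v,x} s1" using K2[OF x2(1) v1(2)] .
      then show ?thesis using wcrossing_sym[of chi u v s1 "{v,x}"] x2(2) by simp
    qed
  next
    case False
    then obtain x where x: "x \<in> L" "s1 = {v,x}" using s1 unfolding Ledges_def by blast
    show ?thesis
    proof (cases "s2 \<in> T")
      case True
      then have "weak_segment X u v s2" using T_weak[OF T] by blast
      then show ?thesis using K2[OF x(1)] x(2) by simp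
    next
      case False
      then obtain y where "s2 = {v,y}" using s2 unfolding Ledges_def by blast
      then have "v \<in> s1 \<inter> s2" using x by blast
      then show ?thesis using crossing_disj[of "chi_v chi u v" s1 s2] unfolding wcrossing_def by blast
    qed
  qed
next
  fix s assume s: "weak_segment X u v s \<and> s \<notin> T \<union> Ledges"
  show "\<exists>s'\<in>T \<union> Ledges. wcrossing chi u v s s' \<or> wcrossing chi u v s' s"
  proof (cases "v \<in> s")
    case True
    obtain p q where pq: "s = {p,q}" "p \<noteq> q" "p \<in> X \<union> {u,v}" "q \<in> X \<union> {u,v}" "s \<noteq> {u,v}"
      using s unfolding weak_segment_def segment_def by blast
    have "\<exists>x. s = {v,x} \<and> x \<in> X"
    proof (cases "p = v")
      case True
      then have "q \<noteq> u" using pq by blast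
      then show ?thesis using pq True by blast
    next
      case False
      then have "q = v" using pq \<open>v \<in> s\<close> by blast
      then have "p \<noteq> u" using pq by blast
      then have "s = {v,p}" "p \<in> X" using pq \<open>q = v\<close> False by auto
      then show ?thesis by blast
    qed
    then obtain x where x: "s = {v,x}" "x \<in> X" by blast
    have "x \<notin> L" using s x unfolding Ledges_def by blast
    then obtain s' where "s' \<in> T" "wcrossing chi u v {v,x} s' \<or> wcrossing chi u v s' {v,x}"
      using vis[OF T x(2)] by blast
    then show ?thesis using x by blast
  next
    case False
    obtain p q where pq: "s = {p,q}" "p \<noteq> q" "p \<in> X \<union> {u,v}" "q \<in> X \<union> {u,v}"
      using s unfolding weak_segment_def segment_def by blast
    have "p \<in> insert u X" "q \<in> insert u X" using pq False by auto
    then have sg: "segment (insert u X) s" unfolding segment_def using pq by blast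
    have "s \<notin> T" using s by blast
    then obtain s' where s': "s' \<in> T" "crossing chi s s' \<or> crossing chi s' s"
      using T sg unfolding triangulation_def by blast
    have "v \<notin> s'" using T_nov[OF T s'(1)] .
    then have "wcrossing chi u v s s' = crossing chi s s'" "wcrossing chi u v s' s = crossing chi s' s"
      using Kvfree False by blast+
    then show ?thesis using s' by blast
  qed
qed

end
context wt
begin

lemma wt_sub: "weak_triangulation chi X u v D \<Longrightarrow> D \<subseteq> Pow (X \<union> {u,v})"
proof
  fix s assume D: "weak_triangulation chi X u v D" and s: "s \<in> D"
  then have "weak_segment X u v s" unfolding weak_triangulation_def by blast
  then have "segment (X \<union> {u,v}) s" unfolding weak_segment_def by blast
  then obtain p q where "p \<in> X \<union> {u,v}" "q \<in> X \<union> {u,v}" "s = {p,q}" unfolding segment_def by blast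
  then show "s \<in> Pow (X \<union> {u,v})" by blast
qed

lemma finD: "weak_triangulation chi X u v D \<Longrightarrow> finite D"
proof -
  assume D: "weak_triangulation chi X u v D"
  have "finite (Pow (X \<union> {u,v}))" using finX by simp
  then show "finite D" using finite_subset[OF wt_sub[OF D]] by simp
qed

lemma cardL: "card Ledges = card L"
proof -
  have "inj_on (\<lambda>x. {v,x}) L"
  proof (rule inj_onI)
    fix x y assume "x \<in> L" "y \<in> L" "{v,x} = {v,y}"
    moreover have "x \<noteq> v" "y \<noteq> v" using \<open>x \<in> L\<close> \<open>y \<in> L\<close> LX vX by auto
    ultimately show "x = y" by (auto simp: doubleton_eq_iff)
  qed
  then show ?thesis unfolding Ledges_def by (rule card_image)
qed

lemma Dv_T: assumes T: "triangulation chi (insert u X) T"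
  shows "{s \<in> T \<union> Ledges. v \<in> s} = Ledges"
proof -
  have "\<And>s. s \<in> T \<Longrightarrow> v \<notin> s" using T_nov[OF T] by blast
  moreover have "\<And>s. s \<in> Ledges \<Longrightarrow> v \<in> s" unfolding Ledges_def by blast
  ultimately show ?thesis by blast
qed

lemma deg_ext: assumes T: "triangulation chi (insert u X) T"
  shows "degree (extension chi X u v T) v = card L"
  unfolding K4[OF T] degree_def Dv_T[OF T] cardL ..

lemma Ledges_sub: assumes D: "weak_triangulation chi X u v D"
  shows "Ledges \<subseteq> {s \<in> D. v \<in> s}"
  using K3[OF D] unfolding Ledges_def by blast

lemma deg_ge: assumes D: "weak_triangulation chi X u v D"
  shows "card L \<le> degree D v"
proof -
  have "finite {s \<in> D. v \<in> s}" using finD[OF D] by simp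
  then have "card Ledges \<le> card {s \<in> D. v \<in> s}" using Ledges_sub[OF D] card_mono by blast
  then show ?thesis unfolding degree_def cardL .
qed

lemma minv: "min_v_degree chi X u v = card L"
proof -
  define A where "A = {degree D v | D. weak_triangulation chi X u v D}"
  have "A \<subseteq> (\<lambda>D. degree D v) ` Pow (Pow (X \<union> {u,v}))"
  proof
    fix y assume "y \<in> A"
    then obtain D where "y = degree D v" "weak_triangulation chi X u v D" unfolding A_def by blast
    then show "y \<in> (\<lambda>D. degree D v) ` Pow (Pow (X \<union> {u,v}))" using wt_sub by blast
  qed
  moreover have "finite (Pow (Pow (X \<union> {u,v})))" using finX by simp
  ultimately have fA: "finite A" using finite_subset by blast
  obtain T0 where T0: "triangulation chi (insert u X) T0" using K7 by blast
  have "weak_triangulation chi X u v (extension chi X u v T0)" using K8[OF T0] K4[OF T0] by simp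
  then have "degree (extension chi X u v T0) v \<in> A" unfolding A_def by blast
  then have "card L \<in> A" using deg_ext[OF T0] by simp
  moreover have "\<And>y. y \<in> A \<Longrightarrow> card L \<le> y"
  proof -
    fix y assume "y \<in> A"
    then obtain D where "y = degree D v" "weak_triangulation chi X u v D" unfolding A_def by blast
    then show "card L \<le> y" using deg_ge by simp
  qed
  ultimately have "Min A = card L" using fA by (intro Min_eqI) auto
  then show ?thesis unfolding min_v_degree_def A_def .
qed

lemma main:
  assumes D: "weak_triangulation chi X u v D"
  shows "(\<exists>T. triangulation chi (insert u X) T \<and> D = extension chi X u v T)
         \<longleftrightarrow> degree D v = min_v_degree chi X u v"
proof
  assume "\<exists>T. triangulation chi (insert u X) T \<and> D = extension chi X u v T"
  then obtain T where T: "triangulation chi (insert u X) T" and DT: "D = extension chi X u v T" by blast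
  show "degree D v = min_v_degree chi X u v" unfolding minv DT using deg_ext[OF T] .
next
  assume "degree D v = min_v_degree chi X u v"
  then have dg: "card {s \<in> D. v \<in> s} = card Ledges" unfolding minv degree_def cardL .
  have fDv: "finite {s \<in> D. v \<in> s}" using finD[OF D] by simp
  have Dv: "{s \<in> D. v \<in> s} = Ledges"
    using card_subset_eq[OF fDv Ledges_sub[OF D]] dg by simp
  define T where "T = {s \<in> D. v \<notin> s}"
  have DTL: "D = T \<union> Ledges" using Dv unfolding T_def by blast
  have Dws: "\<And>s. s \<in> D \<Longrightarrow> weak_segment X u v s" using D unfolding weak_triangulation_def by blast
  have Dnc: "\<And>s1 s2. s1 \<in> D \<Longrightarrow> s2 \<in> D \<Longrightarrow> \<not> wcrossing chi u v s1 s2"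
    using D unfolding weak_triangulation_def by blast
  have Tt: "triangulation chi (insert u X) T"
    unfolding triangulation_def
  proof (intro conjI allI impI ballI)
    fix s assume s: "s \<in> T"
    then have "weak_segment X u v s" "v \<notin> s" using Dws unfolding T_def by auto
    then obtain p q where pq: "s = {p,q}" "p \<noteq> q" "p \<in> X \<union> {u,v}" "q \<in> X \<union> {u,v}"
      unfolding weak_segment_def segment_def by blast
    have "p \<in> insert u X" "q \<in> insert u X" using pq \<open>v \<notin> s\<close> by auto
    then show "segment (insert u X) s" unfolding segment_def using pq by blast
  next
    fix s1 s2 assume s1: "s1 \<in> T" and s2: "s2 \<in> T"
    then have "v \<notin> s1" "v \<notin> s2" "s1 \<in> D" "s2 \<in> D" unfolding T_def by auto
    then have "wcrossing chi u v s1 s2 = crossing chi s1 s2" using Kvfree by blast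
    then show "\<not> crossing chi s1 s2" using Dnc \<open>s1 \<in> D\<close> \<open>s2 \<in> D\<close> by simp
  next
    fix s assume s: "segment (insert u X) s \<and> s \<notin> T"
    have vs: "v \<notin> s" using seg_nov s by blast
    have ws: "weak_segment X u v s" using seg_weak s by blast
    have "s \<notin> D" using s vs unfolding T_def by blast
    then obtain s' where s': "s' \<in> D" "wcrossing chi u v s s' \<or> wcrossing chi u v s' s"
      using D ws unfolding weak_triangulation_def by blast
    then have w1: "wcrossing chi u v s' s" using wcrossing_sym[of chi u v s s'] by blast
    show "\<exists>s'\<in>T. crossing chi s s' \<or> crossing chi s' s"
    proof (cases "v \<in> s'")
      case True
      then have "s' \<in> Ledges" using Dv s' by blast
      then obtain x where x: "x \<in> L" "s' = {v,x}" unfolding Ledges_def by blast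
      then have "\<not> wcrossing chi u v s' s" using K2[OF x(1) ws] by simp
      then show ?thesis using w1 by blast
    next
      case False
      then have "s' \<in> T" using s' unfolding T_def by blast
      moreover have "crossing chi s' s" using w1 Kvfree[OF False vs] by blast
      ultimately show ?thesis by blast
    qed
  qed
  have "D = extension chi X u v T" using DTL K4[OF Tt] by simp
  then show "\<exists>T. triangulation chi (insert u X) T \<and> D = extension chi X u v T" using Tt by blast
qed

end

theorem lemma3p2:
  fixes chi :: "'a \<Rightarrow> 'a \<Rightarrow> 'a \<Rightarrow> int" and X :: "'a set" and u v :: 'a
    and D :: "'a set set"
  assumes "rooted_chirotope chi X u"
    and "v \<notin> X" and "v \<noteq> u"
    and "weak_triangulation chi X u v D"
  shows "(\<exists>T. triangulation chi (insert u X) T \<and> D = extension chi X u v T)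
         \<longleftrightarrow> degree D v = min_v_degree chi X u v"
proof -
  interpret wt chi X u v using assms(1-3) by unfold_locales
  show ?thesis using main[OF assms(4)] .
qed


end
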